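(* Let $q$ be a prime power, $n\ge1$, and let $k$ be an integer with $n(q-1)-\frac{q-1}{2}<k\le n(q-1)$. Put $\ell=n(q-1)-k$. Then \[\dim(\operatorname{Hull}(C_{n,k}^q))=\dim(C_{n,\ell}^q)-1=\binom{n+\ell}{\ell}-1.\]
   Context: For a prime power $q$ and integers $n\ge 1$, $k\ge 0$, the projective Reed-Muller code $C_{n,k}^q\subseteq \mathbb{F}_q^N$, $N=\frac{q^{n+1}-1}{q-1}$, is defined as follows. For each point of $\mathbb{P}^n(\mathbb{F}_q)$ choose the affine representative $(p_0,\dots,p_n)\in\mathbb{F}_q^{n+1}\setminus\{0\}$ whose left-most nonzero coordinate equals $1$, and fix an ordering $P_1',\dots,P_N'$ of these representatives. Then $C_{n,k}^q=\{(F(P_1'),\dots,F(P_N')) : F\in \mathbb{F}_q[x_0,\dots,x_n]_k\}$, where $\mathbb{F}_q[x_0,\dots,x_n]_k$ is the space of homogeneous polynomials of degree $k$ together with $0$ (so $C_{n,0}^q$ is spanned by the all-ones vector). Duals are with respect to the standard dot product, and $\operatorname{Hull}(C)=C\cap C^\perp$. *)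

theory Defs
  imports Complex_Main "HOL-Computational_Algebra.Primes" "HOL-Library.Function_Algebras" "HOL-Library.Cardinality"
begin

text \<open>Points of P^n(F_q): affine representatives p : nat => 'a with p i = 0 for i > n
  (coordinates p 0, ..., p n), not all zero, whose left-most nonzero coordinate equals 1.\<close>
definition proj_points :: "nat \<Rightarrow> (nat \<Rightarrow> 'a::field) set" where
  "proj_points n = {p. (\<forall>i>n. p i = 0) \<and>
      (\<exists>j\<le>n. p j = 1 \<and> (\<forall>i<j. p i = 0))}"

definition monomials :: "nat \<Rightarrow> nat \<Rightarrow> (nat \<Rightarrow> nat) set" where
  "monomials n k = {a. (\<forall>i>n. a i = 0) \<and> (\<Sum>i\<le>n. a i) = k}"

definition hom_poly_eval :: "nat \<Rightarrow> nat \<Rightarrow> ((nat \<Rightarrow> nat) \<Rightarrow> 'a::field) \<Rightarrow> (nat \<Rightarrow> 'a) \<Rightarrow> 'a" where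
  "hom_poly_eval n k c p = (\<Sum>a\<in>monomials n k. c a * (\<Prod>i\<le>n. p i ^ a i))"

text \<open>Words of length N are functions on proj_points n (extended by 0 outside);
  the coordinate order is irrelevant for all notions used here.\<close>
definition words :: "nat \<Rightarrow> ((nat \<Rightarrow> 'a::field) \<Rightarrow> 'a) set" where
  "words n = {v. \<forall>p. p \<notin> proj_points n \<longrightarrow> v p = 0}"

definition PRM :: "nat \<Rightarrow> nat \<Rightarrow> ((nat \<Rightarrow> 'a::field) \<Rightarrow> 'a) set" where
  "PRM n k = {(\<lambda>p. if p \<in> proj_points n then hom_poly_eval n k c p else 0) | c. True}"

definition dot :: "nat \<Rightarrow> ((nat \<Rightarrow> 'a::field) \<Rightarrow> 'a) \<Rightarrow> ((nat \<Rightarrow> 'a) \<Rightarrow> 'a) \<Rightarrow> 'a" where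
  "dot n v w = (\<Sum>p\<in>proj_points n. v p * w p)"

definition dual_code :: "nat \<Rightarrow> ((nat \<Rightarrow> 'a::field) \<Rightarrow> 'a) set \<Rightarrow> ((nat \<Rightarrow> 'a) \<Rightarrow> 'a) set" where
  "dual_code n C = {v \<in> words n. \<forall>w\<in>C. dot n v w = 0}"

definition code_hull :: "nat \<Rightarrow> ((nat \<Rightarrow> 'a::field) \<Rightarrow> 'a) set \<Rightarrow> ((nat \<Rightarrow> 'a) \<Rightarrow> 'a) set" where
  "code_hull n C = C \<inter> dual_code n C"

definition code_dim :: "((nat \<Rightarrow> 'a::field) \<Rightarrow> 'a) set \<Rightarrow> nat" where
  "code_dim C = vector_space.dim (\<lambda>(c::'a) v. (\<lambda>p. c * v p)) C"

end

theory Submission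
  imports Defs "HOL-Computational_Algebra.Polynomial"
begin

interpretation V: vector_space "(\<lambda>(c::'a::field) (v::(nat\<Rightarrow>'a)\<Rightarrow>'a). (\<lambda>p. c * v p))"
  by unfold_locales (auto simp: fun_eq_iff algebra_simps)

lemma card_ge2: "CARD('a::{finite,field}) \<ge> 2"
proof -
  have "{0::'a, 1} \<subseteq> UNIV" by auto
  then have "card {0::'a,1} \<le> CARD('a)" by (intro card_mono) auto
  then show ?thesis by simp
qed

lemma of_nat_card_zero: "of_nat CARD('a::{finite,field}) = (0::'a)"
proof -
  have "(\<Sum>x\<in>(UNIV::'a set). x + 1) = (\<Sum>x\<in>UNIV. x)"
    by (rule sum.reindex_bij_witness[of _ "\<lambda>x. x - 1" "\<lambda>x. x + 1"]) auto
  then show ?thesis by (simp add: sum.distrib)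
qed

lemma fermat_field: 
  assumes "(x::'a::{finite,field}) \<noteq> 0" shows "x ^ (CARD('a) - 1) = 1"
proof -
  let ?U = "UNIV - {0::'a}"
  have "(\<Prod>y\<in>?U. x * y) = (\<Prod>y\<in>?U. y)"
    by (rule prod.reindex_bij_witness[of _ "\<lambda>y. y / x" "\<lambda>y. x * y"]) (use assms in auto)
  moreover have "(\<Prod>y\<in>?U. x * y) = x ^ card ?U * (\<Prod>y\<in>?U. y)"
    by (simp add: prod.distrib)
  moreover have "(\<Prod>y\<in>?U. y) \<noteq> 0" by simp
  moreover have "card ?U = CARD('a) - 1" by (simp add: card_Diff_subset)
  ultimately show ?thesis by auto
qed

lemma pow_q: "(x::'a::{finite,field}) ^ CARD('a) = x"
proof (cases "x = 0")
  case True then show ?thesis using card_ge2[where 'a='a] by (simp add: power_0_left)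
next
  case False
  have "x ^ CARD('a) = x * x ^ (CARD('a) - 1)"
    using card_ge2[where 'a='a] by (simp add: power_eq_if)
  then show ?thesis using fermat_field[OF False] by simp
qed

lemma pow_qm1: "(x::'a::{finite,field}) ^ (CARD('a) - 1) = (if x = 0 then 0 else 1)"
  using fermat_field[of x] card_ge2[where 'a='a] by (auto simp: power_0_left)

lemma pow_mult_qm1:
  assumes "(x::'a::{finite,field}) \<noteq> 0" shows "x ^ (m * (CARD('a) - 1)) = 1"
proof -
  have "x ^ (m * (CARD('a) - 1)) = (x ^ (CARD('a) - 1)) ^ m"
    by (simp add: power_mult[symmetric] mult.commute)
  then show ?thesis using fermat_field[OF assms] by simp
qed

lemma exists_nonroot:
  assumes "0 < r" "r < CARD('a::{finite,field}) - 1"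
  shows "\<exists>c::'a. c \<noteq> 0 \<and> c ^ r \<noteq> 1"
proof (rule ccontr)
  assume "\<not> ?thesis"
  then have sub: "UNIV - {0::'a} \<subseteq> {x. poly (monom 1 r - 1) x = 0}"
    by (auto simp: poly_monom)
  have "degree (monom (1::'a) r - 1) \<le> r"
    by (intro degree_diff_le) (auto simp: degree_monom_le)
  moreover have "monom (1::'a) r - 1 \<noteq> 0"
  proof
    assume "monom (1::'a) r - 1 = 0"
    then have "coeff (monom (1::'a) r - 1) r = 0" by simp
    then show False using assms by simp
  qed
  ultimately have "card {x::'a. poly (monom 1 r - 1) x = 0} \<le> r"
    using card_poly_roots_bound le_trans by metis
  moreover have "card (UNIV - {0::'a}) \<le> card {x::'a. poly (monom 1 r - 1) x = 0}"
    by (rule card_mono[OF _ sub]) simp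
  moreover have "card (UNIV - {0::'a}) = CARD('a) - 1" by (simp add: card_Diff_subset)
  ultimately show False using assms by simp
qed

definition sig :: "nat \<Rightarrow> 'a::{finite,field}" where
  "sig e = (\<Sum>x\<in>UNIV. x ^ e)"

lemma sig_eq: "sig e = (if 0 < e \<and> (CARD('a::{finite,field}) - 1) dvd e then -1 else (0::'a))"
proof -
  let ?q = "CARD('a)"
  have q2: "?q \<ge> 2" by (rule card_ge2)
  show ?thesis
  proof (cases "e = 0")
    case True then show ?thesis by (simp add: sig_def of_nat_card_zero)
  next
    case e: False
    have sp: "sig e = (\<Sum>x\<in>UNIV - {0::'a}. x ^ e)"
      unfolding sig_def using e by (subst sum.remove[of _ 0]) (auto simp: power_0_left)
    show ?thesis
    proof (cases "(?q - 1) dvd e")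
      case True
      then obtain m where m: "e = (?q - 1) * m" by auto
      have "sig e = (\<Sum>x\<in>UNIV - {0::'a}. (1::'a))"
        unfolding sp by (rule sum.cong) (use pow_mult_qm1[of _ m] in \<open>auto simp: m mult.commute\<close>)
      also have "\<dots> = of_nat ?q - 1" by (simp add: card_Diff_subset of_nat_diff)
      finally show ?thesis using True e by (simp add: of_nat_card_zero)
    next
      case False
      define r where "r = e mod (?q - 1)"
      have r: "0 < r" "r < ?q - 1" using False q2 unfolding r_def
        by (auto simp: mod_eq_0_iff_dvd[symmetric] intro: mod_less_divisor)
      obtain c :: 'a where c: "c \<noteq> 0" "c ^ r \<noteq> 1" using exists_nonroot[OF r] by blast
      have "c ^ e = c ^ r"
      proof -
        have "e = (?q - 1) * (e div (?q - 1)) + r" unfolding r_def by simp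
        then have "c ^ e = c ^ ((e div (?q - 1)) * (?q - 1)) * c ^ r"
          by (metis power_add mult.commute)
        then show ?thesis using pow_mult_qm1[OF c(1)] by simp
      qed
      have "sig e = (\<Sum>x\<in>UNIV. (c * x) ^ e)"
        unfolding sig_def
        by (rule sum.reindex_bij_witness[of _ "\<lambda>x. c * x" "\<lambda>x. x / c"]) (use c in auto)
      also have "\<dots> = c ^ e * sig e" by (simp add: sig_def power_mult_distrib sum_distrib_left)
      finally have "(1 - c ^ e) * sig e = (0::'a)" by (simp add: algebra_simps)
      then have "sig e = (0::'a)" using c \<open>c ^ e = c ^ r\<close> by simp
      then show ?thesis using False by simp
    qed
  qed
qed

definition BoxS :: "nat set \<Rightarrow> 'b set \<Rightarrow> (nat \<Rightarrow> 'b) \<Rightarrow> (nat \<Rightarrow> 'b) set" where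
  "BoxS I S d = {p. (\<forall>i\<in>I. p i \<in> S) \<and> (\<forall>i. i \<notin> I \<longrightarrow> p i = d i)}"

lemma BoxS_empty: "BoxS {} S d = {d}"
  by (auto simp: BoxS_def)

lemma BoxS_insert: "a \<notin> I \<Longrightarrow> BoxS (insert a I) S d = (\<Union>x\<in>S. BoxS I S (d(a:=x)))"
  unfolding BoxS_def by (auto; metis fun_upd_other fun_upd_same)

lemma finite_BoxS: "finite I \<Longrightarrow> finite S \<Longrightarrow> finite (BoxS I S d)"
proof (induction I arbitrary: d rule: finite_induct)
  case empty then show ?case by (simp add: BoxS_empty)
next
  case (insert a I) then show ?case by (simp add: BoxS_insert)
qed

lemma sum_BoxS_prod:
  fixes f :: "nat \<Rightarrow> 'b \<Rightarrow> 'c::comm_semiring_1"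
  assumes "finite I" "finite S"
  shows "(\<Sum>p\<in>BoxS I S d. \<Prod>i\<in>I. f i (p i)) = (\<Prod>i\<in>I. \<Sum>x\<in>S. f i x)"
  using assms(1)
proof (induction I arbitrary: d rule: finite_induct)
  case empty then show ?case by (simp add: BoxS_empty)
next
  case (insert a I)
  have "(\<Sum>p\<in>BoxS (insert a I) S d. \<Prod>i\<in>insert a I. f i (p i))
      = (\<Sum>x\<in>S. \<Sum>p\<in>BoxS I S (d(a:=x)). \<Prod>i\<in>insert a I. f i (p i))"
    unfolding BoxS_insert[OF insert(2)]
    using insert.hyps(2)
    by (intro sum.UNION_disjoint) (use assms(2) insert(1) in \<open>auto simp: finite_BoxS, auto simp: BoxS_def\<close>)
  also have "\<dots> = (\<Sum>x\<in>S. f a x * (\<Sum>p\<in>BoxS I S (d(a:=x)). \<Prod>i\<in>I. f i (p i)))"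
  proof (rule sum.cong[OF refl])
    fix x assume "x \<in> S"
    have "(\<Sum>p\<in>BoxS I S (d(a:=x)). \<Prod>i\<in>insert a I. f i (p i))
        = (\<Sum>p\<in>BoxS I S (d(a:=x)). f a x * (\<Prod>i\<in>I. f i (p i)))"
      by (rule sum.cong[OF refl]) (use insert(1,2) in \<open>auto simp: BoxS_def\<close>)
    then show "(\<Sum>p\<in>BoxS I S (d(a:=x)). \<Prod>i\<in>insert a I. f i (p i))
        = f a x * (\<Sum>p\<in>BoxS I S (d(a:=x)). \<Prod>i\<in>I. f i (p i))"
      by (simp add: sum_distrib_left)
  qed
  also have "\<dots> = (\<Sum>x\<in>S. f a x) * (\<Prod>i\<in>I. \<Sum>x\<in>S. f i x)"
    by (simp add: insert.IH sum_distrib_right)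
  finally show ?case using insert(1,2) by simp
qed

definition strat :: "nat \<Rightarrow> nat \<Rightarrow> (nat \<Rightarrow> 'a::field) set" where
  "strat n j = {p. (\<forall>i>n. p i = 0) \<and> (\<forall>i<j. p i = 0) \<and> p j = 1}"

lemma strat_Box: "j \<le> n \<Longrightarrow> strat n j = BoxS {j<..n} UNIV (\<lambda>i. if i = j then 1 else 0)"
  unfolding strat_def BoxS_def by auto

lemma proj_points_strat: "proj_points n = (\<Union>j\<in>{..n}. strat n j)"
  unfolding proj_points_def strat_def by auto

lemma strat_disjoint: "i \<noteq> j \<Longrightarrow> strat n i \<inter> strat n j = {}"
  unfolding strat_def
  by (auto; metis linorder_neqE_nat zero_neq_one)

lemma finite_strat: "j \<le> n \<Longrightarrow> finite (strat n j :: (nat \<Rightarrow> 'a::{finite,field}) set)"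
  by (simp add: strat_Box finite_BoxS)

lemma finite_proj_points: "finite (proj_points n :: (nat \<Rightarrow> 'a::{finite,field}) set)"
  by (simp add: proj_points_strat finite_strat)

lemma sum_proj_points:
  fixes g :: "(nat \<Rightarrow> 'a::{finite,field}) \<Rightarrow> 'b::comm_monoid_add"
  shows "(\<Sum>p\<in>proj_points n. g p) = (\<Sum>j\<le>n. \<Sum>p\<in>strat n j. g p)"
  unfolding proj_points_strat
  by (rule sum.UNION_disjoint) (auto simp: finite_strat strat_disjoint)

lemma prod_split_strat:
  fixes j n :: nat
  assumes "j \<le> n"
  shows "(\<Prod>i\<le>n. h i) = (\<Prod>i<j. h i) * h j * (\<Prod>i\<in>{j<..n}. (h i :: 'b::comm_monoid_mult))"
proof -
  have "{..n} = {..<j} \<union> ({j} \<union> {j<..n})" using assms by (auto simp: set_eq_iff)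
  moreover have "prod h ({..<j} \<union> ({j} \<union> {j<..n})) = prod h {..<j} * prod h ({j} \<union> {j<..n})"
    by (rule prod.union_disjoint) auto
  moreover have "prod h ({j} \<union> {j<..n}) = h j * prod h {j<..n}"
    by (subst prod.union_disjoint) auto
  ultimately show ?thesis by (simp add: mult.assoc)
qed

lemma sum_strat_mono:
  assumes "j \<le> n"
  shows "(\<Sum>p\<in>strat n j. \<Prod>i\<le>n. p i ^ c i)
    = (if \<forall>i<j. c i = 0 then (\<Prod>i\<in>{j<..n}. sig (c i)) else (0::'a::{finite,field}))"
proof -
  have "(\<Sum>p\<in>strat n j. \<Prod>i\<le>n. p i ^ c i)
      = (\<Sum>p\<in>strat n j. (if \<forall>i<j. c i = 0 then 1 else 0) * (\<Prod>i\<in>{j<..n}. (p i :: 'a) ^ c i))"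
  proof (rule sum.cong[OF refl])
    fix p :: "nat \<Rightarrow> 'a" assume p: "p \<in> strat n j"
    have "(\<Prod>i<j. p i ^ c i) = (if \<forall>i<j. c i = 0 then 1 else 0)"
      using p by (auto simp: strat_def power_0_left)
    then show "(\<Prod>i\<le>n. p i ^ c i) = (if \<forall>i<j. c i = 0 then 1 else 0) * (\<Prod>i\<in>{j<..n}. p i ^ c i)"
      using p prod_split_strat[OF assms, of "\<lambda>i. p i ^ c i"] by (simp add: strat_def)
  qed
  also have "\<dots> = (if \<forall>i<j. c i = 0 then 1 else 0) * (\<Prod>i\<in>{j<..n}. sig (c i))"
    by (simp add: sum_distrib_left[symmetric] strat_Box[OF assms] sig_def
        sum_BoxS_prod[of "{j<..n}" UNIV "\<lambda>i x. x ^ c i"])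
  finally show ?thesis by (cases "\<forall>i<j. c i = 0") auto
qed

definition Ssum :: "nat \<Rightarrow> (nat \<Rightarrow> nat) \<Rightarrow> 'a::{finite,field}" where
  "Ssum n c = (\<Sum>p\<in>proj_points n. \<Prod>i\<le>n. p i ^ c i)"

lemma Ssum_formula:
  "(Ssum n c :: 'a::{finite,field}) = (\<Sum>j\<le>n. if \<forall>i<j. c i = 0 then (\<Prod>i\<in>{j<..n}. sig (c i)) else 0)"
  unfolding Ssum_def sum_proj_points by (rule sum.cong[OF refl]) (simp add: sum_strat_mono)

lemma sig_nz: "(sig e \<noteq> (0::'a::{finite,field})) \<longleftrightarrow> 0 < e \<and> (CARD('a) - 1) dvd e"
  by (simp add: sig_eq)

lemma sum_split_at:
  fixes j n :: nat
  assumes "j \<le> n"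
  shows "(\<Sum>i\<le>n. h i) = (\<Sum>i<j. h i) + h j + (\<Sum>i\<in>{j<..n}. (h i :: 'b::comm_monoid_add))"
proof -
  have "{..n} = {..<j} \<union> ({j} \<union> {j<..n})" using assms by (auto simp: set_eq_iff)
  moreover have "sum h ({..<j} \<union> ({j} \<union> {j<..n})) = sum h {..<j} + sum h ({j} \<union> {j<..n})"
    by (rule sum.union_disjoint) auto
  moreover have "sum h ({j} \<union> {j<..n}) = h j + sum h {j<..n}"
    by (subst sum.union_disjoint) auto
  ultimately show ?thesis by (simp add: add.assoc)
qed

lemma Ssum_small:
  assumes "(\<Sum>i\<le>n. c i) < CARD('a::{finite,field}) - 1"
  shows "(Ssum n c :: 'a) = (if \<forall>i<n. c i = 0 then 1 else 0)"
proof -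
  let ?t = "\<lambda>j. if \<forall>i<j. c i = 0 then (\<Prod>i\<in>{j<..n}. sig (c i)) else (0::'a)"
  have cn: "c n < CARD('a) - 1"
    using assms member_le_sum[of n "{..n}" c] by auto
  have sn: "sig (c n) = (0::'a)"
    using cn by (auto simp: sig_eq dest: dvd_imp_le)
  have "\<forall>j\<in>{..<n}. ?t j = 0"
  proof
    fix j assume "j \<in> {..<n}"
    then have "n \<in> {j<..n}" by auto
    then show "?t j = 0" using sn by (auto intro: prod_zero)
  qed
  then have "(\<Sum>j<n. ?t j) = 0" by simp
  then have "(\<Sum>j\<le>n. ?t j) = ?t n"
    by (simp add: lessThan_Suc_atMost[symmetric])
  then show ?thesis by (simp add: Ssum_formula)
qed

lemma Ssum_D:
  assumes n: "n \<ge> 1" and sumc: "(\<Sum>i\<le>n. c i) = n * (CARD('a::{finite,field}) - 1)"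
  shows "(Ssum n c :: 'a) = 0"
proof -
  let ?q = "CARD('a)"
  have q2: "?q \<ge> 2" by (rule card_ge2)
  let ?t = "\<lambda>j. if \<forall>i<j. c i = 0 then (\<Prod>i\<in>{j<..n}. sig (c i)) else (0::'a)"
  have "\<exists>i\<le>n. 0 < c i"
  proof (rule ccontr)
    assume "\<not> ?thesis"
    then have "(\<Sum>i\<le>n. c i) = 0" by simp
    then show False using sumc n q2 by simp
  qed
  define z where "z = (LEAST i. 0 < c i)"
  have cz: "0 < c z" unfolding z_def using \<open>\<exists>i\<le>n. 0 < c i\<close> by (metis LeastI)
  have zn: "z \<le> n" unfolding z_def using \<open>\<exists>i\<le>n. 0 < c i\<close> by (metis Least_le le_trans)
  have below: "\<forall>i<z. c i = 0" unfolding z_def using not_less_Least by blast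
  have G: "?t j \<noteq> 0 \<Longrightarrow> j \<le> z \<and> z \<le> Suc j \<and> (\<forall>i\<in>{j<..n}. 0 < c i \<and> (?q - 1) dvd c i)" for j
  proof -
    assume nz: "?t j \<noteq> 0"
    then have all0: "\<forall>i<j. c i = 0" by meson
    then have jz: "j \<le> z" using cz by (metis not_le less_numeral_extra(3))
    have facs: "\<forall>i\<in>{j<..n}. sig (c i) \<noteq> (0::'a)"
      using nz all0 by auto
    then have pd: "\<forall>i\<in>{j<..n}. 0 < c i \<and> (?q - 1) dvd c i" by (simp add: sig_nz)
    have "z \<le> Suc j"
    proof (rule ccontr)
      assume "\<not> z \<le> Suc j"
      then have "Suc j \<in> {j<..n}" "c (Suc j) = 0" using below zn by auto
      then show False using pd by fastforce
    qed
    then show ?thesis using jz pd by blast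
  qed
  show ?thesis
  proof (cases "\<exists>j\<le>n. ?t j \<noteq> 0")
    case False
    then show ?thesis by (simp add: Ssum_formula)
  next
    case True
    then obtain j0 where j0: "j0 \<le> n" "?t j0 \<noteq> 0" by blast
    have Pz: "\<forall>i\<in>{z<..n}. 0 < c i \<and> (?q - 1) dvd c i"
      using G[OF j0(2)] by auto
    have split: "(\<Sum>i\<le>n. c i) = c z + (\<Sum>i\<in>{z<..n}. c i)"
      using sum_split_at[OF zn, of c] below by simp
    have lowb: "card {z<..n} * (?q - 1) \<le> (\<Sum>i\<in>{z<..n}. c i)"
      using sum_bounded_below[of "{z<..n}" "?q - 1" c] Pz by (simp add: dvd_imp_le)
    have dvdS: "(?q - 1) dvd (\<Sum>i\<in>{z<..n}. c i)"
      by (rule dvd_sum) (use Pz in auto)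
    have czeq: "c z = n * (?q - 1) - (\<Sum>i\<in>{z<..n}. c i)"
      using split sumc by simp
    have z1: "z \<ge> 1"
    proof (rule ccontr)
      assume "\<not> z \<ge> 1"
      then have "z = 0" by simp
      then have "card {z<..n} = n" by simp
      then show False using lowb czeq cz by simp
    qed
    have dz: "(?q - 1) dvd c z"
      unfolding czeq by (rule dvd_diff_nat) (use dvdS in auto)
    have sz: "sig (c z) = (-1::'a)" using cz dz by (simp add: sig_eq)
    have tz: "?t z = (\<Prod>i\<in>{z<..n}. sig (c i))" using below by simp
    have ins: "{z - 1<..n} = insert z {z<..n}" using z1 zn by auto
    have tz1: "?t (z - 1) = - (\<Prod>i\<in>{z<..n}. sig (c i))"
    proof -
      have "?t (z - 1) = (\<Prod>i\<in>{z - 1<..n}. sig (c i))" using below by auto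
      also have "\<dots> = sig (c z) * (\<Prod>i\<in>{z<..n}. sig (c i))"
        unfolding ins by (simp add: prod.insert)
      finally show ?thesis using sz by simp
    qed
    have "(\<Sum>j\<le>n. ?t j) = (\<Sum>j\<in>{z - 1, z}. ?t j)"
    proof (rule sum.mono_neutral_right)
      show "finite {..n}" by simp
      show "{z - 1, z} \<subseteq> {..n}" using zn by auto
      show "\<forall>j\<in>{..n} - {z - 1, z}. ?t j = 0"
      proof
        fix j assume j: "j \<in> {..n} - {z - 1, z}"
        show "?t j = 0"
        proof (rule ccontr)
          assume "?t j \<noteq> 0"
          from G[OF this] j show False by auto
        qed
      qed
    qed
    also have "\<dots> = ?t (z - 1) + (\<Sum>j\<in>{z}. ?t j)"
      by (rule sum.insert) (use z1 in auto)
    also have "\<dots> = ?t (z - 1) + ?t z" by (simp only: sum.insert_if finite.emptyI sum.empty empty_iff if_False add_0_right)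
    also have "\<dots> = 0" using tz tz1 by simp
    finally show ?thesis by (simp add: Ssum_formula)
  qed
qed

definition mnm :: "nat \<Rightarrow> (nat \<Rightarrow> nat) \<Rightarrow> (nat \<Rightarrow> 'a::field) \<Rightarrow> 'a" where
  "mnm n a p = (\<Prod>i\<le>n. p i ^ a i)"

definition Fm :: "nat \<Rightarrow> nat \<Rightarrow> ((nat \<Rightarrow> 'a::field) \<Rightarrow> 'a) set" where
  "Fm n d = {hom_poly_eval n d c | c. True}"

lemma monomials_Box: "monomials n d \<subseteq> BoxS {..n} {..d} (\<lambda>_. 0)"
proof
  fix a assume a: "a \<in> monomials n d"
  have "\<forall>i\<le>n. a i \<le> d"
    using a member_le_sum[of _ "{..n}" a] by (auto simp: monomials_def)
  then show "a \<in> BoxS {..n} {..d} (\<lambda>_. 0)" using a by (auto simp: monomials_def BoxS_def)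
qed

lemma finite_monomials: "finite (monomials n d)"
  by (rule finite_subset[OF monomials_Box finite_BoxS]) auto

lemma hpe_mono: "hom_poly_eval n d c p = (\<Sum>a\<in>monomials n d. c a * mnm n a p)"
  by (simp add: hom_poly_eval_def mnm_def)

lemma Fm_mnm: "a \<in> monomials n d \<Longrightarrow> mnm n a \<in> Fm n d"
proof -
  assume a: "a \<in> monomials n d"
  have "hom_poly_eval n d (\<lambda>b. if b = a then 1 else 0) = mnm n a"
  proof (rule ext)
    fix p
    have "hom_poly_eval n d (\<lambda>b. if b = a then 1 else 0) p
        = (\<Sum>b\<in>monomials n d. if b = a then mnm n b p else 0)"
      unfolding hpe_mono by (rule sum.cong) auto
    also have "\<dots> = mnm n a p" using a finite_monomials by (simp add: sum.delta')
    finally show "hom_poly_eval n d (\<lambda>b. if b = a then 1 else 0) p = mnm n a p" .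
  qed
  then show ?thesis unfolding Fm_def by (metis (mono_tags, lifting) mem_Collect_eq)
qed

lemma FmE: "f \<in> Fm n d \<Longrightarrow> \<exists>c. f = (\<lambda>p. \<Sum>a\<in>monomials n d. c a * mnm n a p)"
  unfolding Fm_def by (auto simp: hpe_mono[abs_def])

lemma FmI: "(\<lambda>p. \<Sum>a\<in>monomials n d. c a * mnm n a p) \<in> Fm n d"
  unfolding Fm_def by (auto simp: hpe_mono[abs_def])

lemma Fm_add: "f \<in> Fm n d \<Longrightarrow> g \<in> Fm n d \<Longrightarrow> (\<lambda>p. f p + g p) \<in> Fm n d"
proof -
  assume F: "f \<in> Fm n d" "g \<in> Fm n d"
  obtain c where "f = (\<lambda>p. \<Sum>a\<in>monomials n d. c a * mnm n a p)" using FmE[OF F(1)] by blast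
  moreover obtain c' where "g = (\<lambda>p. \<Sum>a\<in>monomials n d. c' a * mnm n a p)" using FmE[OF F(2)] by blast
  ultimately
  have "(\<lambda>p. f p + g p) = (\<lambda>p. \<Sum>a\<in>monomials n d. (c a + c' a) * mnm n a p)"
    by (simp add: sum.distrib algebra_simps)
  then show ?thesis using FmI by metis
qed

lemma Fm_smult: "f \<in> Fm n d \<Longrightarrow> (\<lambda>p. k * f p) \<in> Fm n d"
proof -
  assume F: "f \<in> Fm n d"
  obtain c where "f = (\<lambda>p. \<Sum>a\<in>monomials n d. c a * mnm n a p)" using FmE[OF F] by blast
  then have "(\<lambda>p. k * f p) = (\<lambda>p. \<Sum>a\<in>monomials n d. (k * c a) * mnm n a p)"
    by (simp add: sum_distrib_left algebra_simps)
  then show ?thesis using FmI by metis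
qed

lemma Fm_zero: "(\<lambda>p. 0) \<in> Fm n d"
  using FmI[of "\<lambda>_. 0" n d] by simp

lemma Fm_diff: "f \<in> Fm n d \<Longrightarrow> g \<in> Fm n d \<Longrightarrow> (\<lambda>p. f p - g p) \<in> Fm n d"
  using Fm_add[of f n d "\<lambda>p. (-1) * g p"] Fm_smult[of g n d "-1"] by simp

lemma Fm_sum: "finite A \<Longrightarrow> (\<And>x. x \<in> A \<Longrightarrow> f x \<in> Fm n d) \<Longrightarrow> (\<lambda>p. \<Sum>x\<in>A. f x p) \<in> Fm n d"
proof (induction A rule: finite_induct)
  case empty then show ?case by (simp add: Fm_zero)
next
  case (insert a A)
  then show ?case using Fm_add[of "f a" n d "\<lambda>p. \<Sum>x\<in>A. f x p"] by simp
qed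

lemma mnm_mult: "mnm n a p * mnm n b p = mnm n (\<lambda>i. a i + b i) p"
  by (simp add: mnm_def prod.distrib[symmetric] power_add)

lemma monomials_add: "a \<in> monomials n d1 \<Longrightarrow> b \<in> monomials n d2 \<Longrightarrow> (\<lambda>i. a i + b i) \<in> monomials n (d1 + d2)"
  by (simp add: monomials_def sum.distrib)

lemma Fm_mult: "f \<in> Fm n d1 \<Longrightarrow> g \<in> Fm n d2 \<Longrightarrow> (\<lambda>p. f p * g p) \<in> Fm n (d1 + d2)"
proof -
  assume F: "f \<in> Fm n d1" "g \<in> Fm n d2"
  obtain c where f: "f = (\<lambda>p. \<Sum>a\<in>monomials n d1. c a * mnm n a p)" using FmE[OF F(1)] by blast
  obtain c' where g: "g = (\<lambda>p. \<Sum>a\<in>monomials n d2. c' a * mnm n a p)" using FmE[OF F(2)] by blast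
  have "(\<lambda>p. f p * g p) = (\<lambda>p. \<Sum>a\<in>monomials n d1. \<Sum>b\<in>monomials n d2.
            (c a * c' b) * mnm n (\<lambda>i. a i + b i) p)"
    unfolding f g by (rule ext) (simp add: sum_distrib_left sum_distrib_right mnm_mult[symmetric] algebra_simps)
  also have "\<dots> \<in> Fm n (d1 + d2)"
    by (intro Fm_sum finite_monomials Fm_smult Fm_mnm monomials_add) 
  finally show ?thesis .
qed

lemma Fm_one: "(\<lambda>p. 1::'a::field) \<in> Fm n 0"
proof -
  have "mnm n (\<lambda>_. 0) \<in> (Fm n 0 :: ((nat \<Rightarrow> 'a) \<Rightarrow> 'a) set)" by (rule Fm_mnm) (simp add: monomials_def)
  moreover have "mnm n (\<lambda>_. 0) = (\<lambda>p::nat \<Rightarrow> 'a. 1::'a)" by (simp add: mnm_def fun_eq_iff)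
  ultimately show ?thesis by simp
qed

lemma Fm_pow: "f \<in> Fm n d \<Longrightarrow> (\<lambda>p. f p ^ r) \<in> Fm n (r * d)"
proof (induction r)
  case 0 then show ?case using Fm_one by simp
next
  case (Suc r)
  then show ?case using Fm_mult[of f n d "\<lambda>p. f p ^ r" "r * d"] by simp
qed

lemma Fm_prod: "finite I \<Longrightarrow> (\<And>i. i \<in> I \<Longrightarrow> f i \<in> Fm n d) \<Longrightarrow> (\<lambda>p. \<Prod>i\<in>I. f i p) \<in> Fm n (card I * d)"
proof (induction I rule: finite_induct)
  case empty then show ?case using Fm_one by simp
next
  case (insert a I)
  then show ?case using Fm_mult[of "f a" n d "\<lambda>p. \<Prod>i\<in>I. f i p" "card I * d"] by simp
qed

lemma Fm_var: "i \<le> n \<Longrightarrow> (\<lambda>p. p i :: 'a::field) \<in> Fm n 1"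
proof -
  assume i: "i \<le> n"
  have "(\<lambda>j. if j = i then 1 else 0) \<in> monomials n 1"
    using i by (simp add: monomials_def)
  moreover have "mnm n (\<lambda>j. if j = i then 1 else 0) = (\<lambda>p::nat \<Rightarrow> 'a. p i)"
  proof (rule ext)
    fix p :: "nat \<Rightarrow> 'a"
    have "mnm n (\<lambda>j. if j = i then 1 else 0) p = (\<Prod>j\<le>n. if j = i then p j else 1)"
      unfolding mnm_def by (rule prod.cong) auto
    also have "\<dots> = p i" using i by (simp add: prod.delta')
    finally show "mnm n (\<lambda>j. if j = i then 1 else 0) p = p i" .
  qed
  ultimately show ?thesis using Fm_mnm by metis
qed

lemma Fm_cong: "f \<in> Fm n d \<Longrightarrow> (\<And>p. f p = g p) \<Longrightarrow> g \<in> Fm n d"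
proof -
  assume "f \<in> Fm n d" "\<And>p. f p = g p"
  then have "f = g" by (simp add: fun_eq_iff)
  with \<open>f \<in> Fm n d\<close> show ?thesis by simp
qed

lemma Fm_deg_eq: "f \<in> Fm n d \<Longrightarrow> d = d' \<Longrightarrow> f \<in> Fm n d'" by simp

definition evf :: "nat \<Rightarrow> ((nat \<Rightarrow> 'a::field) \<Rightarrow> 'a) \<Rightarrow> ((nat \<Rightarrow> 'a) \<Rightarrow> 'a)" where
  "evf n f = (\<lambda>p. if p \<in> proj_points n then f p else 0)"

lemma PRM_Fm: "PRM n d = evf n ` Fm n d"
  unfolding PRM_def Fm_def evf_def by auto

lemma sum_fun_apply: "(\<Sum>x\<in>A. f x) p = (\<Sum>x\<in>A. f x p)"
  by (induction A rule: infinite_finite_induct) auto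

lemma Ssum_mnm: "Ssum n c = (\<Sum>p\<in>proj_points n. mnm n c p)"
  by (simp add: Ssum_def mnm_def)

lemma ortho_Fm:
  fixes f g :: "(nat \<Rightarrow> 'a::{finite,field}) \<Rightarrow> 'a"
  assumes n: "n \<ge> 1" and d: "d1 + d2 = n * (CARD('a) - 1)"
    and f: "f \<in> Fm n d1" and g: "g \<in> Fm n d2"
  shows "(\<Sum>p\<in>proj_points n. f p * g p) = 0"
proof -
  obtain c where fc: "f = (\<lambda>p. \<Sum>a\<in>monomials n d1. c a * mnm n a p)" using FmE[OF f] by blast
  obtain c' where gc: "g = (\<lambda>p. \<Sum>a\<in>monomials n d2. c' a * mnm n a p)" using FmE[OF g] by blast
  have "(\<Sum>p\<in>proj_points n. f p * g p)
      = (\<Sum>p\<in>proj_points n. \<Sum>a\<in>monomials n d1. \<Sum>b\<in>monomials n d2.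
            (c a * c' b) * mnm n (\<lambda>i. a i + b i) p)"
    unfolding fc gc by (simp add: sum_distrib_left sum_distrib_right mnm_mult[symmetric] algebra_simps)
  also have "\<dots> = (\<Sum>a\<in>monomials n d1. \<Sum>b\<in>monomials n d2.
            (c a * c' b) * Ssum n (\<lambda>i. a i + b i))"
    by (simp add: Ssum_mnm sum_distrib_left sum.swap[of _ "proj_points n"])
  also have "\<dots> = 0"
  proof (intro sum.neutral ballI)
    fix a b assume a: "a \<in> monomials n d1" and b: "b \<in> monomials n d2"
    have "(\<Sum>i\<le>n. a i + b i) = n * (CARD('a) - 1)"
      using a b d by (simp add: monomials_def sum.distrib)
    then show "c a * c' b * Ssum n (\<lambda>i. a i + b i) = (0::'a)"
      using Ssum_D[OF n, where 'a='a] by simp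
  qed
  finally show ?thesis .
qed

lemma gram_small:
  assumes a: "a \<in> monomials n l" and b: "b \<in> monomials n l"
    and l: "2 * l < CARD('a::{finite,field}) - 1"
  shows "(\<Sum>p\<in>proj_points n. mnm n a p * mnm n b p) = (if \<forall>i<n. a i + b i = 0 then 1 else (0::'a))"
proof -
  have "(\<Sum>i\<le>n. a i + b i) = 2 * l" using a b by (simp add: monomials_def sum.distrib)
  then have "Ssum n (\<lambda>i. a i + b i) = (if \<forall>i<n. a i + b i = 0 then 1 else (0::'a))"
    using l by (intro Ssum_small) simp
  then show ?thesis by (simp add: mnm_mult Ssum_mnm)
qed

definition Ufam :: "nat \<Rightarrow> (nat \<Rightarrow> nat) \<Rightarrow> (nat \<Rightarrow> 'a::{finite,field}) \<Rightarrow> 'a" where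
  "Ufam n b0 = (\<lambda>p. if p \<in> strat n 0 then (\<Prod>i\<in>{0<..n}. p i ^ (CARD('a) - 1 - b0 i)) else 0)"

lemma dot_Ufam:
  fixes b b0 :: "nat \<Rightarrow> nat"
  assumes bl: "\<forall>i. b i < CARD('a::{finite,field}) - 1" and b0l: "\<forall>i. b0 i < CARD('a) - 1"
  shows "dot n (evf n (mnm n b)) (Ufam n b0 :: _ \<Rightarrow> 'a)
     = (if \<forall>i\<in>{0<..n}. b i = b0 i then (-1) ^ n else 0)"
proof -
  let ?q = "CARD('a)"
  have sub: "(strat n 0 :: (nat \<Rightarrow> 'a) set) \<subseteq> proj_points n" by (auto simp: proj_points_strat)
  have "dot n (evf n (mnm n b)) (Ufam n b0 :: _ \<Rightarrow> 'a)
      = (\<Sum>p\<in>proj_points n. if p \<in> strat n 0 then mnm n b p * (\<Prod>i\<in>{0<..n}. p i ^ (?q - 1 - b0 i)) else 0)"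
    unfolding dot_def evf_def Ufam_def by (rule sum.cong) auto
  also have "\<dots> = (\<Sum>p\<in>strat n 0. mnm n b p * (\<Prod>i\<in>{0<..n}. p i ^ (?q - 1 - b0 i)))"
    using sub by (simp add: sum.If_cases finite_proj_points Int_absorb1 Int_absorb2 Int_commute)
  also have "\<dots> = (\<Sum>p\<in>strat n 0. \<Prod>i\<in>{0<..n}. (p i :: 'a) ^ (b i + (?q - 1 - b0 i)))"
  proof (rule sum.cong[OF refl])
    fix p :: "nat \<Rightarrow> 'a" assume p: "p \<in> strat n 0"
    have "mnm n b p = (\<Prod>i\<in>{0<..n}. p i ^ b i)"
      using prod_split_strat[of 0 n "\<lambda>i. p i ^ b i"] p by (simp add: mnm_def strat_def)
    then show "mnm n b p * (\<Prod>i\<in>{0<..n}. p i ^ (?q - 1 - b0 i)) = (\<Prod>i\<in>{0<..n}. p i ^ (b i + (?q - 1 - b0 i)))"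
      by (simp add: prod.distrib[symmetric] power_add)
  qed
  also have "\<dots> = (\<Prod>i\<in>{0<..n}. sig (b i + (?q - 1 - b0 i)))"
    unfolding strat_Box[OF le0] sig_def by (rule sum_BoxS_prod) auto
  also have "\<dots> = (if \<forall>i\<in>{0<..n}. b i = b0 i then (-1) ^ n else 0)"
  proof (cases "\<forall>i\<in>{0<..n}. b i = b0 i")
    case True
    then have "(\<Prod>i\<in>{0<..n}. sig (b i + (?q - 1 - b0 i))) = (\<Prod>i\<in>{0<..n}. (-1::'a))"
    proof (intro prod.cong refl)
      fix i assume i: "i \<in> {0<..n}"
      have e: "b i + (?q - 1 - b0 i) = ?q - 1" using True i b0l[rule_format, of i] by simp
      show "sig (b i + (?q - 1 - b0 i)) = (-1::'a)"
        unfolding e using card_ge2[where 'a='a] by (simp add: sig_eq)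
    qed
    then show ?thesis using True by simp
  next
    case False
    then obtain i where i: "i \<in> {0<..n}" "b i \<noteq> b0 i" by blast
    have "\<not> (?q - 1) dvd (b i + (?q - 1 - b0 i))"
    proof
      assume dv: "(?q - 1) dvd (b i + (?q - 1 - b0 i))"
      have b0i: "b0 i < ?q - 1" and bi: "b i < ?q - 1" using b0l bl by auto
      have pos: "0 < b i + (?q - 1 - b0 i)" using b0i by simp
      have lt: "b i + (?q - 1 - b0 i) < 2 * (?q - 1)" using bi b0i by simp
      from dv obtain m where m: "b i + (?q - 1 - b0 i) = (?q - 1) * m" by blast
      have "m \<noteq> 0" using m pos by auto
      moreover have "\<not> m \<ge> 2"
      proof
        assume "m \<ge> 2"
        then have "(?q - 1) * 2 \<le> (?q - 1) * m" by simp
        then show False using m lt by simp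
      qed
      ultimately have "m = 1" by simp
      then have "b i + (?q - 1 - b0 i) = ?q - 1" using m by simp
      then show False using i(2) b0i by simp
    qed
    then have "sig (b i + (?q - 1 - b0 i)) = (0::'a)" by (simp add: sig_eq)
    then have "(\<Prod>i\<in>{0<..n}. sig (b i + (?q - 1 - b0 i))) = (0::'a)"
      using i(1) by (intro prod_zero) auto
    then show ?thesis using False by (simp only: if_False)
  qed
  finally show ?thesis .
qed

lemma monomials_0: "monomials 0 l = {\<lambda>i. if i = 0 then l else 0}"
  unfolding monomials_def by (auto simp: fun_eq_iff)

lemma monomials_Suc: "monomials (Suc n) l = (\<Union>t\<in>{..l}. (\<lambda>a. a(Suc n := t)) ` monomials n (l - t))"
proof (intro set_eqI iffI)
  fix a assume a: "a \<in> monomials (Suc n) l"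
  have s: "(\<Sum>i\<le>Suc n. a i) = (\<Sum>i\<le>n. a i) + a (Suc n)" by simp
  have "a(Suc n := 0) \<in> monomials n (l - a (Suc n))"
    using a s by (auto simp: monomials_def)
  moreover have "a = (a(Suc n := 0))(Suc n := a (Suc n))" by simp
  moreover have "a (Suc n) \<in> {..l}" using a s by (auto simp: monomials_def)
  ultimately show "a \<in> (\<Union>t\<in>{..l}. (\<lambda>a. a(Suc n := t)) ` monomials n (l - t))" by blast
next
  fix a assume "a \<in> (\<Union>t\<in>{..l}. (\<lambda>a. a(Suc n := t)) ` monomials n (l - t))"
  then obtain t b where t: "t \<le> l" and b: "b \<in> monomials n (l - t)" and ab: "a = b(Suc n := t)" by auto
  have "(\<Sum>i\<le>n. a i) = (\<Sum>i\<le>n. b i)" unfolding ab by (rule sum.cong) auto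
  then show "a \<in> monomials (Suc n) l" using b t ab by (auto simp: monomials_def)
qed

lemma card_monomials: "card (monomials n l) = (n + l) choose l"
proof (induction n arbitrary: l)
  case 0 then show ?case by (simp add: monomials_0)
next
  case (Suc n)
  have inj: "inj_on (\<lambda>a. a(Suc n := t)) (monomials n s)" for t s
  proof (rule inj_onI)
    fix a b assume a: "a \<in> monomials n s" and b: "b \<in> monomials n s" and e: "a(Suc n := t) = b(Suc n := t)"
    show "a = b"
    proof
      fix i show "a i = b i"
        using a b fun_cong[OF e, of i] by (cases "i = Suc n") (auto simp: monomials_def)
    qed
  qed
  have "card (monomials (Suc n) l) = (\<Sum>t\<le>l. card ((\<lambda>a. a(Suc n := t)) ` monomials n (l - t)))"
    unfolding monomials_Suc
  proof (rule card_UN_disjoint)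
    show "finite {..l}" by simp
    show "\<forall>t\<in>{..l}. finite ((\<lambda>a. a(Suc n := t)) ` monomials n (l - t))" by (simp add: finite_monomials)
    show "\<forall>t\<in>{..l}. \<forall>t'\<in>{..l}. t \<noteq> t' \<longrightarrow>
        (\<lambda>a. a(Suc n := t)) ` monomials n (l - t) \<inter> (\<lambda>a. a(Suc n := t')) ` monomials n (l - t') = {}"
      by (auto simp: fun_eq_iff) (metis fun_upd_same)
  qed
  also have "\<dots> = (\<Sum>t\<le>l. (n + (l - t)) choose (l - t))"
    by (simp add: card_image[OF inj] Suc.IH)
  also have "\<dots> = (\<Sum>s\<le>l. (n + s) choose s)"
    by (rule sum.reindex_bij_witness[of _ "\<lambda>s. l - s" "\<lambda>s. l - s"]) auto
  also have "\<dots> = (Suc n + l) choose l" by (simp add: sum_choose_lower)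
  finally show ?case .
qed

lemma strat_of_proj:
  assumes "p \<in> proj_points n" obtains j where "j \<le> n" "p \<in> strat n j"
  using assms unfolding proj_points_strat by blast

lemma small_in_big:
  fixes b :: "nat \<Rightarrow> nat"
  assumes n: "n \<ge> 1" and l: "2 * l < CARD('a::{finite,field}) - 1"
    and b: "b \<in> monomials n l" and z: "z < n" "0 < b z"
  shows "(evf n (mnm n b) :: (nat \<Rightarrow> 'a) \<Rightarrow> 'a) \<in> PRM n (n * (CARD('a) - 1) - l)"
proof -
  let ?q = "CARD('a)"
  define d where "d = n * (?q - 1) - 2 * l"
  have zq: "z * (?q - 1) < d"
  proof -
    have "z * (?q - 1) \<le> (n - 1) * (?q - 1)" using z by (intro mult_le_mono1) simp
    also have "(n - 1) * (?q - 1) + (?q - 1) = n * (?q - 1)"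
      using n by (metis add.commute mult_eq_if not_one_le_zero)
    finally show ?thesis unfolding d_def using l by linarith
  qed
  define trm where "trm = (\<lambda>j (p::nat \<Rightarrow> 'a). p j ^ (d - j * (?q - 1)) * (\<Prod>i<j. p z ^ (?q - 1) - p i ^ (?q - 1)))"
  define E where "E = (\<lambda>p. \<Sum>j\<le>z. trm j p)"
  have termFm: "trm j \<in> Fm n d" if j: "j \<le> z" for j
  proof -
    have A: "(\<lambda>p. (p j::'a) ^ (d - j * (?q - 1))) \<in> Fm n ((d - j * (?q - 1)) * 1)"
      using j z by (intro Fm_pow Fm_var) simp
    have B: "(\<lambda>p. \<Prod>i<j. (p z::'a) ^ (?q - 1) - p i ^ (?q - 1)) \<in> Fm n (card {..<j} * ((?q - 1) * 1))"
      using j z by (intro Fm_prod Fm_diff Fm_pow Fm_var) auto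
    have "(d - j * (?q - 1)) * 1 + card {..<j} * ((?q - 1) * 1) = d"
      using zq j by (simp add: mult_le_mono1 order.strict_trans1 less_imp_le) 
         (metis le_add_diff_inverse2 le_trans less_imp_le mult_le_mono1 zq j)
    then show ?thesis using Fm_mult[OF A B] unfolding trm_def by simp
  qed
  have EFm: "E \<in> Fm n d" unfolding E_def by (intro Fm_sum termFm) auto
  have bFm: "mnm n b \<in> Fm n l" by (rule Fm_mnm[OF b])
  have FFm: "(\<lambda>p. mnm n b p * E p) \<in> Fm n (n * (?q - 1) - l)"
  proof -
    have "l + d = n * (?q - 1) - l" unfolding d_def using l zq d_def by linarith
    then show ?thesis using Fm_mult[OF bFm EFm] by simp
  qed
  have eq: "evf n (mnm n b) = evf n (\<lambda>p. mnm n b p * E p)"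
  proof (rule ext)
    fix p :: "nat \<Rightarrow> 'a"
    show "evf n (mnm n b) p = evf n (\<lambda>p. mnm n b p * E p) p"
    proof (cases "p \<in> proj_points n \<and> mnm n b p \<noteq> 0")
      case False then show ?thesis by (auto simp: evf_def)
    next
      case True
      then have pp: "p \<in> proj_points n" and mb: "mnm n b p \<noteq> 0" by auto
      have pz: "p z \<noteq> 0"
      proof
        assume "p z = 0"
        then have "p z ^ b z = 0" using z by simp
        then have "mnm n b p = 0" unfolding mnm_def using z by (intro prod_zero) auto
        then show False using mb by simp
      qed
      obtain j0 where j0: "j0 \<le> n" "p \<in> strat n j0" using strat_of_proj[OF pp] by blast
      have j0z: "j0 \<le> z" using j0 pz by (auto simp: strat_def not_le[symmetric])
      have pj0: "p j0 = 1" and below: "\<forall>i<j0. p i = 0" using j0 by (auto simp: strat_def)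
      have pzq: "p z ^ (?q - 1) = 1" using pz pow_qm1[of "p z"] by simp
      have tv: "trm j p = (if j = j0 then 1 else 0)" if jz: "j \<le> z" for j
      proof (cases j j0 rule: linorder_cases)
        case less
        then have "p j = 0" using below by auto
        moreover have "d - j * (?q - 1) \<noteq> 0" using zq jz
          by (metis diff_is_0_eq leD le_trans mult_le_mono1)
        ultimately show ?thesis using less unfolding trm_def by (simp add: power_0_left)
      next
        case equal
        have "(\<Prod>i<j. p z ^ (?q - 1) - p i ^ (?q - 1)) = 1"
          using equal below pzq card_ge2[where 'a='a] by (simp add: power_0_left)
        then show ?thesis using equal pj0 unfolding trm_def by simp
      next
        case greater
        have "(\<Prod>i<j. p z ^ (?q - 1) - p i ^ (?q - 1)) = 0"
          using greater pzq pj0 by (intro prod_zero) (auto intro!: bexI[of _ j0])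
        then show ?thesis using greater unfolding trm_def by simp
      qed
      have "E p = (\<Sum>j\<le>z. if j = j0 then 1 else 0)"
        unfolding E_def by (rule sum.cong) (auto simp: tv)
      also have "\<dots> = 1" using j0z by simp
      finally show ?thesis by (simp add: evf_def)
    qed
  qed
  show ?thesis unfolding PRM_Fm eq using FFm by blast
qed

lemma proj_p0: "p \<in> proj_points n \<Longrightarrow> p \<notin> strat n 0 \<Longrightarrow> p 0 = 0"
  by (auto simp: proj_points_strat strat_def)

lemma strat0_sub: "strat n 0 \<subseteq> proj_points n"
  by (auto simp: proj_points_strat)

lemma mnm_strat0:
  assumes "p \<in> strat n 0"
  shows "mnm n a p = (\<Prod>i\<in>{0<..n}. p i ^ a i)"
  using prod_split_strat[of 0 n "\<lambda>i. p i ^ a i"] assms by (simp add: mnm_def strat_def)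

lemma sum_over_strat0:
  fixes g :: "(nat \<Rightarrow> 'a::{finite,field}) \<Rightarrow> 'a"
  assumes "\<And>p. p \<in> proj_points n \<Longrightarrow> p \<notin> strat n 0 \<Longrightarrow> g p = 0"
  shows "(\<Sum>p\<in>proj_points n. g p) = (\<Sum>p\<in>strat n 0. g p)"
  by (rule sum.mono_neutral_right) (use assms strat0_sub finite_proj_points in auto)

lemma ann_base:
  fixes v :: "(nat \<Rightarrow> 'a::{finite,field}) \<Rightarrow> 'a" and \<sigma> :: "nat \<Rightarrow> nat"
  assumes hv: "\<forall>w\<in>PRM n k. dot n v w = 0"
    and s: "(\<Sum>i\<in>{0<..n}. \<sigma> i) < k"
  shows "(\<Sum>P\<in>strat n 0. v P * (\<Prod>i\<in>{0<..n}. P i ^ \<sigma> i)) = 0"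
proof -
  define a where "a = (\<lambda>i. if i = 0 then k - (\<Sum>i\<in>{0<..n}. \<sigma> i) else if i \<le> n then \<sigma> i else 0)"
  have a0: "a 0 \<noteq> 0" using s by (simp add: a_def)
  have "(\<Sum>i\<le>n. a i) = a 0 + (\<Sum>i\<in>{0<..n}. a i)"
    using sum_split_at[of 0 n a] by simp
  also have "(\<Sum>i\<in>{0<..n}. a i) = (\<Sum>i\<in>{0<..n}. \<sigma> i)" by (rule sum.cong) (auto simp: a_def)
  finally have "(\<Sum>i\<le>n. a i) = k" using s by (simp add: a_def)
  then have am: "a \<in> monomials n k" by (simp add: monomials_def a_def)
  have "evf n (mnm n a) \<in> PRM n k" unfolding PRM_Fm using Fm_mnm[OF am] by blast
  then have "dot n v (evf n (mnm n a)) = 0" using hv by blast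
  moreover have "dot n v (evf n (mnm n a)) = (\<Sum>P\<in>strat n 0. v P * (\<Prod>i\<in>{0<..n}. P i ^ \<sigma> i))"
  proof -
    have "dot n v (evf n (mnm n a)) = (\<Sum>p\<in>proj_points n. v p * mnm n a p)"
      unfolding dot_def evf_def by (rule sum.cong) auto
    also have "\<dots> = (\<Sum>p\<in>strat n 0. v p * mnm n a p)"
    proof (rule sum_over_strat0)
      fix p :: "nat \<Rightarrow> 'a" assume "p \<in> proj_points n" "p \<notin> strat n 0"
      then have "p 0 = 0" by (rule proj_p0)
      then have "mnm n a p = 0" unfolding mnm_def using a0 by (intro prod_zero) (auto intro!: bexI[of _ 0])
      then show "v p * mnm n a p = 0" by simp
    qed
    also have "\<dots> = (\<Sum>P\<in>strat n 0. v P * (\<Prod>i\<in>{0<..n}. P i ^ \<sigma> i))"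
      by (rule sum.cong) (auto simp: mnm_strat0 a_def intro!: prod.cong)
    finally show ?thesis .
  qed
  ultimately show ?thesis by simp
qed

definition gam :: "nat \<Rightarrow> 'a::{finite,field} \<Rightarrow> 'a" where
  "gam t a = (if t = 0 then 1 - a ^ (CARD('a) - 1) else - (a ^ (CARD('a) - 1 - t)))"

lemma pow_shift:
  fixes n a :: nat
  assumes "a \<in> {0<..n}"
  shows "(P a ^ s) * (\<Prod>i\<in>{0<..n}. P i ^ \<sigma> i) = (\<Prod>i\<in>{0<..n}. P i ^ (\<sigma>(a := \<sigma> a + s)) i)"
proof -
  have r2: "(\<Prod>i\<in>{0<..n} - {a}. P i ^ (\<sigma>(a := \<sigma> a + s)) i) = (\<Prod>i\<in>{0<..n} - {a}. P i ^ \<sigma> i)"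
    by (rule prod.cong) auto
  have "(\<Prod>i\<in>{0<..n}. P i ^ (\<sigma>(a := \<sigma> a + s)) i) = P a ^ (\<sigma> a + s) * (\<Prod>i\<in>{0<..n} - {a}. P i ^ (\<sigma>(a := \<sigma> a + s)) i)"
    by (subst prod.remove[OF _ assms]) auto
  then have "(\<Prod>i\<in>{0<..n}. P i ^ (\<sigma>(a := \<sigma> a + s)) i) = P a ^ (\<sigma> a + s) * (\<Prod>i\<in>{0<..n} - {a}. P i ^ \<sigma> i)"
    using r2 by simp
  also have "\<dots> = P a ^ s * (P a ^ \<sigma> a * (\<Prod>i\<in>{0<..n} - {a}. P i ^ \<sigma> i))"
    by (simp add: power_add algebra_simps)
  also have "P a ^ \<sigma> a * (\<Prod>i\<in>{0<..n} - {a}. P i ^ \<sigma> i) = (\<Prod>i\<in>{0<..n}. P i ^ \<sigma> i)"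
    using assms by (simp add: prod.remove)
  finally show ?thesis by simp
qed

lemma sum_shift:
  fixes n a :: nat
  assumes "a \<in> {0<..n}"
  shows "(\<Sum>i\<in>{0<..n}. (\<sigma>(a := \<sigma> a + s)) i) = (\<Sum>i\<in>{0<..n}. \<sigma> i) + (s::nat)"
proof -
  have r2: "(\<Sum>i\<in>{0<..n} - {a}. (\<sigma>(a := \<sigma> a + s)) i) = (\<Sum>i\<in>{0<..n} - {a}. \<sigma> i)"
    by (rule sum.cong) auto
  have "(\<Sum>i\<in>{0<..n}. (\<sigma>(a := \<sigma> a + s)) i) = (\<sigma> a + s) + (\<Sum>i\<in>{0<..n} - {a}. (\<sigma>(a := \<sigma> a + s)) i)"
    by (subst sum.remove[OF _ assms]) auto
  then have "(\<Sum>i\<in>{0<..n}. (\<sigma>(a := \<sigma> a + s)) i) = (\<sigma> a + s) + (\<Sum>i\<in>{0<..n} - {a}. \<sigma> i)"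
    using r2 by simp
  also have "(\<Sum>i\<in>{0<..n}. \<sigma> i) = \<sigma> a + (\<Sum>i\<in>{0<..n} - {a}. \<sigma> i)"
    using assms by (simp add: sum.remove)
  ultimately show ?thesis by simp
qed

lemma ann_ind:
  fixes v :: "(nat \<Rightarrow> 'a::{finite,field}) \<Rightarrow> 'a" and e :: "nat \<Rightarrow> nat"
  assumes hv: "\<forall>w\<in>PRM n k. dot n v w = 0"
    and I: "finite I" "I \<subseteq> {0<..n}"
  shows "\<And>\<sigma>. (\<Sum>i\<in>{0<..n}. \<sigma> i) + (\<Sum>i\<in>I. CARD('a) - 1 - e i) < k \<Longrightarrow>
    (\<Sum>P\<in>strat n 0. v P * ((\<Prod>i\<in>I. gam (e i) (P i)) * (\<Prod>i\<in>{0<..n}. P i ^ \<sigma> i))) = 0"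
  using I
proof (induction I rule: finite_induct)
  case empty
  then show ?case using ann_base[OF hv, of \<sigma>] by simp
next
  case (insert a I \<sigma>)
  let ?q = "CARD('a)"
  have aI: "a \<in> {0<..n}" and Isub: "I \<subseteq> {0<..n}" using insert.prems by auto
  define s where "s = ?q - 1 - e a"
  define \<sigma>' where "\<sigma>' = \<sigma>(a := \<sigma> a + s)"
  have bnd: "(\<Sum>i\<in>{0<..n}. \<sigma> i) + s + (\<Sum>i\<in>I. ?q - 1 - e i) < k"
    using insert.prems(1) insert.hyps by (simp add: s_def add.assoc)
  have IH1: "(\<Sum>P\<in>strat n 0. v P * ((\<Prod>i\<in>I. gam (e i) (P i)) * (\<Prod>i\<in>{0<..n}. P i ^ \<sigma> i))) = 0"
    using bnd by (intro insert.IH Isub) simp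
  have IH2: "(\<Sum>P\<in>strat n 0. v P * ((\<Prod>i\<in>I. gam (e i) (P i)) * (\<Prod>i\<in>{0<..n}. P i ^ \<sigma>' i))) = 0"
    using bnd sum_shift[OF aI, of \<sigma> s] unfolding \<sigma>'_def by (intro insert.IH Isub) simp
  have shift: "P a ^ s * (\<Prod>i\<in>{0<..n}. P i ^ \<sigma> i) = (\<Prod>i\<in>{0<..n}. P i ^ \<sigma>' i)" for P :: "nat \<Rightarrow> 'a"
    unfolding \<sigma>'_def by (rule pow_shift[OF aI])
  show ?case
  proof (cases "e a = 0")
    case True
    have "(\<Sum>P\<in>strat n 0. v P * ((\<Prod>i\<in>insert a I. gam (e i) (P i)) * (\<Prod>i\<in>{0<..n}. P i ^ \<sigma> i)))
        = (\<Sum>P\<in>strat n 0. v P * ((\<Prod>i\<in>I. gam (e i) (P i)) * (\<Prod>i\<in>{0<..n}. P i ^ \<sigma> i))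
             - v P * ((\<Prod>i\<in>I. gam (e i) (P i)) * (P a ^ s * (\<Prod>i\<in>{0<..n}. P i ^ \<sigma> i))))"
      using insert.hyps True by (intro sum.cong refl) (simp add: gam_def s_def algebra_simps)
    also have "\<dots> = 0" using IH1 IH2 by (simp add: sum_subtractf shift)
    finally show ?thesis .
  next
    case False
    have "(\<Sum>P\<in>strat n 0. v P * ((\<Prod>i\<in>insert a I. gam (e i) (P i)) * (\<Prod>i\<in>{0<..n}. P i ^ \<sigma> i)))
        = (\<Sum>P\<in>strat n 0. - (v P * ((\<Prod>i\<in>I. gam (e i) (P i)) * (P a ^ s * (\<Prod>i\<in>{0<..n}. P i ^ \<sigma> i)))))"
      using insert.hyps False by (intro sum.cong refl) (simp add: gam_def s_def algebra_simps)
    also have "\<dots> = 0" using IH2 by (simp add: sum_negf shift)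
    finally show ?thesis .
  qed
qed

lemma theta_eq:
  "(\<Sum>t<CARD('a). a ^ (CARD('a) - Suc t) * y ^ t) = (if y = a then 0 else (1::'a::{finite,field}))"
proof -
  let ?q = "CARD('a)"
  let ?S = "(\<Sum>t<?q. a ^ (?q - Suc t) * y ^ t)"
  have e: "y - a = (y - a) * ?S"
    using power_diff_sumr2[of y ?q a] by (simp add: pow_q)
  show ?thesis
  proof (cases "y = a")
    case True
    have "?S = (\<Sum>t<?q. a ^ (?q - 1))"
    proof (rule sum.cong[OF refl])
      fix t assume "t \<in> {..<?q}"
      then have "?q - Suc t + t = ?q - 1" by auto
      then show "a ^ (?q - Suc t) * y ^ t = a ^ (?q - 1)" using True by (metis power_add)
    qed
    also have "\<dots> = of_nat ?q * a ^ (?q - 1)" by simp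
    finally show ?thesis using True by (simp add: of_nat_card_zero)
  next
    case False
    then have "?S = 1" using e by (metis diff_eq_diff_eq diff_zero mult_cancel_left1 right_minus_eq)
    then show ?thesis using False by simp
  qed
qed

lemma delta_exp: "(if y = a then 1 else 0) = (\<Sum>t<CARD('a). gam t a * y ^ t :: 'a::{finite,field})"
proof -
  let ?q = "CARD('a)"
  have q0: "0 < ?q" using card_ge2[where 'a='a] by simp
  have "(\<Sum>t<?q. gam t a * y ^ t) = (\<Sum>t<?q. (if t = 0 then 1 else 0) - a ^ (?q - Suc t) * y ^ t)"
    by (rule sum.cong) (auto simp: gam_def)
  also have "\<dots> = 1 - (\<Sum>t<?q. a ^ (?q - Suc t) * y ^ t)"
    using q0 by (simp add: sum_subtractf)
  also have "\<dots> = (if y = a then 1 else 0)" by (simp add: theta_eq)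
  finally show ?thesis by simp
qed

lemma prod_ind: "finite A \<Longrightarrow> (\<Prod>i\<in>A. if Q i then 1 else 0) = (if \<forall>i\<in>A. Q i then 1 else (0::'a::field))"
  by (induction A rule: finite_induct) auto

definition EF :: "nat \<Rightarrow> (nat \<Rightarrow> nat) set" where
  "EF n = BoxS {0<..n} {..<CARD('a::{finite,field})} (\<lambda>_. 0)"

lemma interp:
  fixes v :: "(nat \<Rightarrow> 'a::{finite,field}) \<Rightarrow> 'a"
  assumes y: "y \<in> strat n 0"
  shows "v y = (\<Sum>e\<in>BoxS {0<..n} {..<CARD('a)} (\<lambda>_. 0).
     (\<Sum>P\<in>strat n 0. v P * (\<Prod>i\<in>{0<..n}. gam (e i) (P i))) * (\<Prod>i\<in>{0<..n}. y i ^ e i))"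
proof -
  let ?E = "BoxS {0<..n} {..<CARD('a)} (\<lambda>_. 0)"
  have fs: "finite (strat n 0 :: (nat \<Rightarrow> 'a) set)" by (simp add: finite_strat)
  have fE: "finite ?E" by (simp add: finite_BoxS)
  have "v y = (\<Sum>P\<in>strat n 0. v P * (if y = P then 1 else 0))"
    using y fs by (simp add: if_distrib[of "\<lambda>x. _ * x"] sum.delta cong: if_cong)
  also have "\<dots> = (\<Sum>P\<in>strat n 0. v P * (\<Sum>e\<in>?E. (\<Prod>i\<in>{0<..n}. gam (e i) (P i)) * (\<Prod>i\<in>{0<..n}. y i ^ e i)))"
  proof (rule sum.cong[OF refl])
    fix P :: "nat \<Rightarrow> 'a" assume P: "P \<in> strat n 0"
    have "y = P \<longleftrightarrow> (\<forall>i\<in>{0<..n}. y i = P i)"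
    proof
      assume "\<forall>i\<in>{0<..n}. y i = P i"
      show "y = P"
      proof
        fix x show "y x = P x"
          using y P \<open>\<forall>i\<in>{0<..n}. y i = P i\<close> by (cases "x = 0"; cases "x \<le> n") (auto simp: strat_def)
      qed
    qed auto
    then have "(if y = P then 1 else 0) = (\<Prod>i\<in>{0<..n}. if y i = P i then 1 else (0::'a))"
      by (simp add: prod_ind)
    also have "\<dots> = (\<Prod>i\<in>{0<..n}. \<Sum>t<CARD('a). gam t (P i) * y i ^ t)"
      by (simp add: delta_exp)
    also have "\<dots> = (\<Sum>e\<in>?E. \<Prod>i\<in>{0<..n}. gam (e i) (P i) * y i ^ e i)"
      by (rule sum_BoxS_prod[symmetric]) auto
    also have "\<dots> = (\<Sum>e\<in>?E. (\<Prod>i\<in>{0<..n}. gam (e i) (P i)) * (\<Prod>i\<in>{0<..n}. y i ^ e i))"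
      by (simp add: prod.distrib)
    finally show "v P * (if y = P then 1 else 0) = v P * (\<Sum>e\<in>?E. (\<Prod>i\<in>{0<..n}. gam (e i) (P i)) * (\<Prod>i\<in>{0<..n}. y i ^ e i))"
      by simp
  qed
  also have "\<dots> = (\<Sum>e\<in>?E. (\<Sum>P\<in>strat n 0. v P * (\<Prod>i\<in>{0<..n}. gam (e i) (P i))) * (\<Prod>i\<in>{0<..n}. y i ^ e i))"
    by (simp add: sum_distrib_left sum_distrib_right sum.swap[of _ "strat n 0"] mult.assoc)
  finally show ?thesis .
qed

lemma coeff_vanish:
  fixes v :: "(nat \<Rightarrow> 'a::{finite,field}) \<Rightarrow> 'a"
  assumes hv: "\<forall>w\<in>PRM n (n * (CARD('a) - 1) - l). dot n v w = 0"
    and e: "e \<in> BoxS {0<..n} {..<CARD('a)} (\<lambda>_. 0)" and big: "l < (\<Sum>i\<in>{0<..n}. e i)"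
  shows "(\<Sum>P\<in>strat n 0. v P * (\<Prod>i\<in>{0<..n}. gam (e i) (P i))) = 0"
proof -
  let ?q = "CARD('a)"
  have ei: "\<forall>i\<in>{0<..n}. e i \<le> ?q - 1" using e by (auto simp: BoxS_def)
  have s1: "(\<Sum>i\<in>{0<..n}. ?q - 1 - e i) + (\<Sum>i\<in>{0<..n}. e i) = n * (?q - 1)"
  proof -
    have "(\<Sum>i\<in>{0<..n}. ?q - 1 - e i) + (\<Sum>i\<in>{0<..n}. e i) = (\<Sum>i\<in>{0<..n}. (?q - 1 - e i) + e i)"
      by (simp add: sum.distrib)
    also have "\<dots> = (\<Sum>i\<in>{0<..n}. ?q - 1)"
    proof (intro sum.cong refl)
      fix i assume "i \<in> {0<..n}"
      then have "e i \<le> ?q - 1" using ei by blast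
      then show "?q - 1 - e i + e i = ?q - 1" by simp
    qed
    finally show ?thesis by simp
  qed
  have bnd: "(\<Sum>i\<in>{0<..n}. (\<lambda>_. 0::nat) i) + (\<Sum>i\<in>{0<..n}. ?q - 1 - e i) < n * (?q - 1) - l"
    using s1 big by simp
  have "(\<Sum>P\<in>strat n 0. v P * ((\<Prod>i\<in>{0<..n}. gam (e i) (P i)) * (\<Prod>i\<in>{0<..n}. P i ^ (\<lambda>_. 0::nat) i))) = 0"
    by (rule ann_ind[OF hv _ _ bnd]) auto
  then show ?thesis by simp
qed

lemma substep1:
  fixes v :: "(nat \<Rightarrow> 'a::{finite,field}) \<Rightarrow> 'a"
  assumes hv: "\<forall>w\<in>PRM n (n * (CARD('a) - 1) - l). dot n v w = 0"
  shows "\<exists>G\<in>Fm n l. \<forall>y\<in>strat n 0. v y = G y"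
proof -
  let ?E = "BoxS {0<..n} {..<CARD('a)} (\<lambda>_. 0)"
  let ?EL = "{e\<in>?E. (\<Sum>i\<in>{0<..n}. e i) \<le> l}"
  define c where "c = (\<lambda>e. \<Sum>P\<in>strat n 0. v P * (\<Prod>i\<in>{0<..n}. gam (e i) (P i)))"
  define ext where "ext = (\<lambda>e::nat \<Rightarrow> nat. e(0 := l - (\<Sum>i\<in>{0<..n}. e i)))"
  define G where "G = (\<lambda>p. \<Sum>e\<in>?EL. c e * mnm n (ext e) p)"
  have fE: "finite ?E" by (simp add: finite_BoxS)
  have extm: "ext e \<in> monomials n l" if e: "e \<in> ?EL" for e
  proof -
    have z: "\<forall>i. i \<notin> {0<..n} \<longrightarrow> e i = 0" using e by (auto simp: BoxS_def)
    have "(\<Sum>i\<le>n. ext e i) = ext e 0 + (\<Sum>i\<in>{0<..n}. ext e i)"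
      using sum_split_at[of 0 n "ext e"] by simp
    also have "(\<Sum>i\<in>{0<..n}. ext e i) = (\<Sum>i\<in>{0<..n}. e i)"
      by (rule sum.cong) (auto simp: ext_def)
    finally have "(\<Sum>i\<le>n. ext e i) = l" using e by (simp add: ext_def)
    moreover have "\<forall>i>n. ext e i = 0" using z by (auto simp: ext_def)
    ultimately show ?thesis by (simp add: monomials_def)
  qed
  have GFm: "G \<in> Fm n l" unfolding G_def
    by (intro Fm_sum Fm_smult Fm_mnm extm) (use fE in auto)
  have "\<forall>y\<in>strat n 0. v y = G y"
  proof
    fix y :: "nat \<Rightarrow> 'a" assume y: "y \<in> strat n 0"
    have "v y = (\<Sum>e\<in>?E. c e * (\<Prod>i\<in>{0<..n}. y i ^ e i))"
      unfolding c_def by (rule interp[OF y])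
    also have "\<dots> = (\<Sum>e\<in>?EL. c e * (\<Prod>i\<in>{0<..n}. y i ^ e i))"
    proof (rule sum.mono_neutral_right[OF fE])
      show "?EL \<subseteq> ?E" by blast
      show "\<forall>e\<in>?E - ?EL. c e * (\<Prod>i\<in>{0<..n}. y i ^ e i) = 0"
      proof
        fix e assume "e \<in> ?E - ?EL"
        then have "c e = 0" unfolding c_def by (intro coeff_vanish[OF hv]) auto
        then show "c e * (\<Prod>i\<in>{0<..n}. y i ^ e i) = 0" by simp
      qed
    qed
    also have "\<dots> = G y"
      unfolding G_def by (rule sum.cong[OF refl]) (auto simp: mnm_strat0[OF y] ext_def intro!: prod.cong)
    finally show "v y = G y" .
  qed
  then show ?thesis using GFm by blast
qed

definition FP :: "nat \<Rightarrow> nat \<Rightarrow> nat \<Rightarrow> (nat \<Rightarrow> 'a::{finite,field}) \<Rightarrow> (nat \<Rightarrow> 'a) \<Rightarrow> 'a" where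
  "FP n l j P = (\<lambda>x. x j ^ (CARD('a) - 1 - l) * (\<Prod>i\<in>{0<..<j}. x j ^ (CARD('a) - 1) - x i ^ (CARD('a) - 1))
      * (\<Prod>i\<in>{j<..n}. x j ^ (CARD('a) - 1) - (x i - P i * x j) ^ (CARD('a) - 1)))"

lemma FP_Fm:
  assumes n: "n \<ge> 1" and l: "l < CARD('a::{finite,field}) - 1" and j: "1 \<le> j" "j \<le> n"
  shows "(FP n l j P :: (nat \<Rightarrow> 'a) \<Rightarrow> 'a) \<in> Fm n (n * (CARD('a) - 1) - l)"
proof -
  let ?q = "CARD('a)"
  have A: "(\<lambda>x. (x j::'a) ^ (?q - 1 - l)) \<in> Fm n ((?q - 1 - l) * 1)"
    using j by (intro Fm_pow Fm_var) simp
  have B: "(\<lambda>x. \<Prod>i\<in>{0<..<j}. (x j::'a) ^ (?q - 1) - x i ^ (?q - 1)) \<in> Fm n (card {0<..<j} * ((?q - 1) * 1))"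
    using j by (intro Fm_prod Fm_diff Fm_pow Fm_var) auto
  have C: "(\<lambda>x. \<Prod>i\<in>{j<..n}. (x j::'a) ^ (?q - 1) - (x i - P i * x j) ^ (?q - 1)) \<in> Fm n (card {j<..n} * ((?q - 1) * 1))"
    using j by (intro Fm_prod Fm_diff Fm_pow Fm_var Fm_smult) auto
  have deg: "(?q - 1 - l) * 1 + card {0<..<j} * ((?q - 1) * 1) + card {j<..n} * ((?q - 1) * 1) = n * (?q - 1) - l"
  proof -
    have "card {0<..<j} + card {j<..n} = n - 1" using j by simp
    then have "card {0<..<j} * (?q - 1) + card {j<..n} * (?q - 1) = (n - 1) * (?q - 1)"
      by (metis add_mult_distrib)
    moreover have "(n - 1) * (?q - 1) + (?q - 1) = n * (?q - 1)"
      using n by (metis add.commute mult_eq_if not_one_le_zero)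
    ultimately have "card {0<..<j} * (?q - 1) + card {j<..n} * (?q - 1) + (?q - 1) = n * (?q - 1)" by simp
    then show ?thesis using l card_ge2[where 'a='a] by (simp; linarith)
  qed
  have "(\<lambda>x. (x j::'a) ^ (?q - 1 - l) * (\<Prod>i\<in>{0<..<j}. x j ^ (?q - 1) - x i ^ (?q - 1))
      * (\<Prod>i\<in>{j<..n}. x j ^ (?q - 1) - (x i - P i * x j) ^ (?q - 1)))
     \<in> Fm n ((?q - 1 - l) * 1 + card {0<..<j} * ((?q - 1) * 1) + card {j<..n} * ((?q - 1) * 1))"
    by (intro Fm_mult A B C)
  then show ?thesis unfolding FP_def deg .
qed

lemma FP_val:
  fixes P Q :: "nat \<Rightarrow> 'a::{finite,field}"
  assumes l: "l < CARD('a) - 1" and j: "1 \<le> j" "j \<le> n" and P: "P \<in> strat n j"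
    and Q: "Q \<in> proj_points n" "Q 0 = 0"
  shows "FP n l j P Q = (if Q = P then 1 else 0)"
proof -
  let ?q = "CARD('a)"
  have q2: "?q \<ge> 2" by (rule card_ge2)
  obtain j' where j': "j' \<le> n" "Q \<in> strat n j'" using strat_of_proj[OF Q(1)] by blast
  have j'1: "j' \<ge> 1" using j' Q(2) by (cases "j' = 0") (auto simp: strat_def)
  have pq: "x ^ (?q - Suc 0) = (if x = 0 then 0 else 1)" for x :: 'a using pow_qm1[of x] by simp
  show ?thesis
  proof (cases j' j rule: linorder_cases)
    case greater
    then have "Q j = 0" using j' by (auto simp: strat_def)
    moreover have "Q \<noteq> P" using \<open>Q j = 0\<close> P by (auto simp: strat_def)
    moreover have "?q - 1 - l \<noteq> 0" using l by simp
    ultimately show ?thesis by (simp add: FP_def power_0_left)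
  next
    case less
    have Qj': "Q j' = 1" using j' by (auto simp: strat_def)
    have "Q \<noteq> P" using Qj' P less by (auto simp: strat_def)
    moreover have "FP n l j P Q = 0"
    proof (cases "Q j = 0")
      case True
      have "?q - 1 - l \<noteq> 0" using l by simp
      then show ?thesis using True by (simp add: FP_def power_0_left)
    next
      case False
      have "(\<Prod>i\<in>{0<..<j}. Q j ^ (?q - 1) - Q i ^ (?q - 1)) = 0"
        using False Qj' less j'1 by (intro prod_zero) (auto simp: pq intro!: bexI[of _ j'])
      then show ?thesis by (simp add: FP_def)
    qed
    ultimately show ?thesis by simp
  next
    case equal
    have Qj: "Q j = 1" and Qb: "\<forall>i<j. Q i = 0" using j' equal by (auto simp: strat_def)
    have "(\<Prod>i\<in>{0<..<j}. Q j ^ (?q - 1) - Q i ^ (?q - 1)) = 1"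
      using Qj Qb q2 by (intro prod.neutral) (auto simp: power_0_left)
    moreover have "(\<Prod>i\<in>{j<..n}. Q j ^ (?q - 1) - (Q i - P i * Q j) ^ (?q - 1))
        = (\<Prod>i\<in>{j<..n}. if Q i = P i then 1 else 0)"
      using Qj by (intro prod.cong refl) (simp add: pq)
    moreover have "(\<forall>i\<in>{j<..n}. Q i = P i) \<longleftrightarrow> Q = P"
    proof
      assume a: "\<forall>i\<in>{j<..n}. Q i = P i"
      show "Q = P"
      proof
        fix x show "Q x = P x"
          using a P j' equal by (cases x j rule: linorder_cases; cases "x \<le> n") (auto simp: strat_def)
      qed
    qed auto
    ultimately show ?thesis using Qj by (simp add: FP_def prod_ind)
  qed
qed

lemma dual_sub:
  fixes v :: "(nat \<Rightarrow> 'a::{finite,field}) \<Rightarrow> 'a"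
  assumes n: "n \<ge> 1" and l: "l < CARD('a) - 1"
    and v: "v \<in> dual_code n (PRM n (n * (CARD('a) - 1) - l))"
  shows "v \<in> PRM n l"
proof -
  let ?q = "CARD('a)"
  let ?k = "n * (?q - 1) - l"
  have hv: "\<forall>w\<in>PRM n ?k. dot n v w = 0" and vw: "v \<in> words n" using v by (auto simp: dual_code_def)
  obtain G where G: "G \<in> Fm n l" and vG: "\<forall>y\<in>strat n 0. v y = G y" using substep1[OF hv] by blast
  have lk: "l + ?k = n * (?q - 1)"
  proof -
    have "l \<le> n * (?q - 1)" using l n by (metis le_trans less_imp_le mult_le_mono1 mult_1)
    then show ?thesis by simp
  qed
  have other: "v P = G P" if P: "P \<in> proj_points n" "P \<notin> strat n 0" for P
  proof -
    obtain j where j: "j \<le> n" "P \<in> strat n j" using strat_of_proj[OF P(1)] by blast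
    have j1: "1 \<le> j" using j P(2) by (cases "j = 0") auto
    have P0: "P 0 = 0" using proj_p0[OF P] .
    have FPm: "FP n l j P \<in> Fm n ?k" by (rule FP_Fm[OF n l j1 j(1)])
    have "evf n (FP n l j P) \<in> PRM n ?k" unfolding PRM_Fm using FPm by blast
    then have d1: "(\<Sum>Q\<in>proj_points n. v Q * FP n l j P Q) = 0"
      using hv unfolding dot_def evf_def by (auto simp: if_distrib cong: sum.cong)
    have d2: "(\<Sum>Q\<in>proj_points n. G Q * FP n l j P Q) = 0"
      by (rule ortho_Fm[OF n lk G FPm])
    have "(\<Sum>Q\<in>proj_points n. (v Q - G Q) * FP n l j P Q) = 0"
      using d1 d2 by (simp add: left_diff_distrib sum_subtractf)
    moreover have "(\<Sum>Q\<in>proj_points n. (v Q - G Q) * FP n l j P Q)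
        = (\<Sum>Q\<in>proj_points n. if Q = P then v P - G P else 0)"
    proof (rule sum.cong[OF refl])
      fix Q :: "nat \<Rightarrow> 'a" assume Q: "Q \<in> proj_points n"
      show "(v Q - G Q) * FP n l j P Q = (if Q = P then v P - G P else 0)"
      proof (cases "Q \<in> strat n 0")
        case True
        then have "v Q - G Q = 0" using vG by simp
        moreover have "Q \<noteq> P" using True P(2) by auto
        ultimately show ?thesis by simp
      next
        case False
        then have "Q 0 = 0" using proj_p0 Q by blast
        then show ?thesis using FP_val[OF l j1 j(1) j(2) Q] by auto
      qed
    qed
    moreover have "(\<Sum>Q\<in>proj_points n. if Q = P then v P - G P else 0) = v P - G P"
      using P(1) by (simp add: finite_proj_points sum.delta)
    ultimately show ?thesis by simp
  qed
  have "v = evf n G"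
  proof
    fix p show "v p = evf n G p"
    proof (cases "p \<in> proj_points n")
      case True then show ?thesis using vG other by (cases "p \<in> strat n 0") (auto simp: evf_def)
    next
      case False then show ?thesis using vw by (simp add: words_def evf_def)
    qed
  qed
  then show ?thesis unfolding PRM_Fm using G by blast
qed

definition evm :: "nat \<Rightarrow> (nat \<Rightarrow> nat) \<Rightarrow> (nat \<Rightarrow> 'a::field) \<Rightarrow> 'a" where
  "evm n b = evf n (mnm n b)"

lemma dot_sum_left:
  "dot n (\<Sum>w\<in>t. (\<lambda>p. u w * w p)) U = (\<Sum>w\<in>t. u w * dot n w U)"
  unfolding dot_def sum_fun_apply
  by (simp add: sum_distrib_right sum_distrib_left sum.swap[of _ t] mult.assoc)

lemma monomials_agree:
  assumes b: "b \<in> monomials n l" and b0: "b0 \<in> monomials n l"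
    and ag: "\<forall>i\<in>{0<..n}. b i = b0 i"
  shows "b = b0"
proof -
  have s: "(\<Sum>i\<in>{0<..n}. b i) = (\<Sum>i\<in>{0<..n}. b0 i)" using ag by (intro sum.cong) auto
  have "b 0 + (\<Sum>i\<in>{0<..n}. b i) = l" using b sum_split_at[of 0 n b] by (simp add: monomials_def)
  moreover have "b0 0 + (\<Sum>i\<in>{0<..n}. b0 i) = l" using b0 sum_split_at[of 0 n b0] by (simp add: monomials_def)
  ultimately have "b 0 = b0 0" using s by simp
  show ?thesis
  proof
    fix i show "b i = b0 i"
      using ag b b0 \<open>b 0 = b0 0\<close> by (cases "i = 0"; cases "i \<le> n") (auto simp: monomials_def)
  qed
qed

lemma monomials_lt:
  assumes "b \<in> monomials n l" "l < CARD('a::{finite,field}) - 1"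
  shows "\<forall>i. b i < CARD('a) - 1"
proof
  fix i show "b i < CARD('a) - 1"
  proof (cases "i \<le> n")
    case True
    then have "b i \<le> l" using assms member_le_sum[of i "{..n}" b] by (simp add: monomials_def)
    then show ?thesis using assms by simp
  next
    case False then show ?thesis using assms card_ge2[where 'a='a] by (simp add: monomials_def)
  qed
qed

lemma dot_evm_U:
  assumes b: "b \<in> monomials n l" and b0: "b0 \<in> monomials n l"
    and l: "l < CARD('a::{finite,field}) - 1"
  shows "dot n (evm n b) (Ufam n b0 :: _ \<Rightarrow> 'a) = (if b = b0 then (-1) ^ n else 0)"
proof -
  have "dot n (evm n b) (Ufam n b0 :: _ \<Rightarrow> 'a) = (if \<forall>i\<in>{0<..n}. b i = b0 i then (-1) ^ n else 0)"
    unfolding evm_def by (rule dot_Ufam[OF monomials_lt[OF b l] monomials_lt[OF b0 l]])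
  then show ?thesis using monomials_agree[OF b b0] by auto
qed

lemma evm_inj:
  assumes l: "l < CARD('a::{finite,field}) - 1"
  shows "inj_on (evm n :: _ \<Rightarrow> (nat \<Rightarrow> 'a) \<Rightarrow> 'a) (monomials n l)"
proof (rule inj_onI)
  fix b b0 assume b: "b \<in> monomials n l" and b0: "b0 \<in> monomials n l"
    and e: "(evm n b :: (nat \<Rightarrow> 'a) \<Rightarrow> 'a) = evm n b0"
  have "dot n (evm n b) (Ufam n b0 :: _ \<Rightarrow> 'a) = dot n (evm n b0) (Ufam n b0)" using e by simp
  then show "b = b0" using dot_evm_U[OF b b0 l] dot_evm_U[OF b0 b0 l] by (auto split: if_splits)
qed

lemma indepI:
  fixes S :: "((nat \<Rightarrow> 'a::field) \<Rightarrow> 'a) set"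
  assumes "\<And>t u v. finite t \<Longrightarrow> t \<subseteq> S \<Longrightarrow> (\<Sum>v\<in>t. (\<lambda>p. u v * v p)) = 0 \<Longrightarrow> v \<in> t \<Longrightarrow> u v = 0"
  shows "V.independent S"
  using assms unfolding V.independent_explicit_module by blast

lemma evm_indep_aux:
  fixes t :: "((nat \<Rightarrow> 'a::{finite,field}) \<Rightarrow> 'a) set" and u :: "((nat \<Rightarrow> 'a) \<Rightarrow> 'a) \<Rightarrow> 'a" and v :: "(nat \<Rightarrow> 'a) \<Rightarrow> 'a"
  assumes l: "l < CARD('a) - 1"
  and t: "finite t" "t \<subseteq> evm n ` monomials n l" and s: "(\<Sum>v\<in>t. (\<lambda>p. u v * v p)) = 0" and v: "v \<in> t"
  shows "u v = 0"
proof -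
  obtain b0 where b0: "b0 \<in> monomials n l" "v = evm n b0" using t v by blast
  have "dot n (\<Sum>w\<in>t. (\<lambda>p. u w * w p)) (Ufam n b0) = (\<Sum>w\<in>t. u w * dot n w (Ufam n b0))"
    by (rule dot_sum_left)
  also have "\<dots> = (\<Sum>w\<in>t. if w = v then u v * (-1) ^ n else 0)"
  proof (rule sum.cong[OF refl])
    fix w assume "w \<in> t"
    then obtain b where b: "b \<in> monomials n l" "w = evm n b" using t by blast
    have wv: "w = v \<longleftrightarrow> b = b0"
    proof
      assume "w = v"
      then have "(evm n b :: (nat \<Rightarrow> 'a) \<Rightarrow> 'a) = evm n b0" using b b0 by simp
      then show "b = b0" using inj_onD[OF evm_inj[OF l] _ b(1) b0(1)] by blast
    next
      assume "b = b0" then show "w = v" using b b0 by simp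
    qed
    have "dot n w (Ufam n b0) = (if b = b0 then (-1) ^ n else 0)"
      unfolding b(2) by (rule dot_evm_U[OF b(1) b0(1) l])
    then show "u w * dot n w (Ufam n b0) = (if w = v then u v * (-1) ^ n else 0)"
      using wv by (cases "w = v") simp_all
  qed
  also have "\<dots> = u v * (-1) ^ n" using t(1) v by (simp add: sum.delta')
  finally have "u v * (-1) ^ n = dot n 0 (Ufam n b0)" using s by simp
  also have "\<dots> = 0" by (simp add: dot_def)
  finally show "u v = 0" by simp
qed

lemma evm_indep:
  assumes l: "l < CARD('a::{finite,field}) - 1"
  shows "V.independent ((evm n :: _ \<Rightarrow> (nat \<Rightarrow> 'a) \<Rightarrow> 'a) ` monomials n l)"
  apply (rule indepI)
  subgoal premises prems for t u v
    by (rule evm_indep_aux[OF l prems])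
  done

lemma evf_Fm_expand:
  assumes "f \<in> Fm n d"
  shows "\<exists>c. evf n f = (\<Sum>a\<in>monomials n d. (\<lambda>p. c a * evm n a p))"
proof -
  obtain c where c: "f = (\<lambda>p. \<Sum>a\<in>monomials n d. c a * mnm n a p)" using FmE[OF assms] by blast
  have "evf n f = (\<Sum>a\<in>monomials n d. (\<lambda>p. c a * evm n a p))"
    unfolding c by (rule ext) (simp add: sum_fun_apply evf_def evm_def sum_distrib_left if_distrib cong: if_cong)
  then show ?thesis by blast
qed

lemma PRM_span: "PRM n l \<subseteq> V.span ((evm n :: _ \<Rightarrow> (nat \<Rightarrow> 'a::{finite,field}) \<Rightarrow> 'a) ` monomials n l)"
proof
  fix v :: "(nat \<Rightarrow> 'a) \<Rightarrow> 'a" assume "v \<in> PRM n l"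
  then obtain f where f: "f \<in> Fm n l" "v = evf n f" unfolding PRM_Fm by blast
  obtain c where "evf n f = (\<Sum>a\<in>monomials n l. (\<lambda>p. c a * evm n a p))" using evf_Fm_expand[OF f(1)] by blast
  moreover have "(\<Sum>a\<in>monomials n l. (\<lambda>p. c a * evm n a p)) \<in> V.span (evm n ` monomials n l)"
    by (intro V.span_sum V.span_scale[where c = "c _", simplified] V.span_base) auto
  ultimately show "v \<in> V.span (evm n ` monomials n l)" using f by simp
qed

lemma evm_PRM: "b \<in> monomials n l \<Longrightarrow> evm n b \<in> PRM n l"
  unfolding PRM_Fm evm_def using Fm_mnm by blast

lemma dim_PRM:
  assumes l: "l < CARD('a::{finite,field}) - 1"
  shows "code_dim (PRM n l :: ((nat \<Rightarrow> 'a) \<Rightarrow> 'a) set) = (n + l) choose l"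
proof -
  have "V.dim (PRM n l :: ((nat \<Rightarrow> 'a) \<Rightarrow> 'a) set) = card (monomials n l)"
  proof (rule V.dim_unique)
    show "(evm n ` monomials n l :: ((nat \<Rightarrow> 'a) \<Rightarrow> 'a) set) \<subseteq> PRM n l" using evm_PRM by blast
    show "PRM n l \<subseteq> V.span (evm n ` monomials n l :: ((nat \<Rightarrow> 'a) \<Rightarrow> 'a) set)" by (rule PRM_span)
    show "V.independent (evm n ` monomials n l :: ((nat \<Rightarrow> 'a) \<Rightarrow> 'a) set)" by (rule evm_indep[OF l])
    show "card (evm n ` monomials n l :: ((nat \<Rightarrow> 'a) \<Rightarrow> 'a) set) = card (monomials n l)"
      by (rule card_image[OF evm_inj[OF l]])
  qed
  then show ?thesis by (simp add: code_dim_def card_monomials)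
qed

lemma dot_sum_left2:
  "dot n (\<Sum>a\<in>A. (\<lambda>p. c a * h a p)) U = (\<Sum>a\<in>A. c a * dot n (h a) U)"
  unfolding dot_def sum_fun_apply
  by (simp add: sum_distrib_right sum_distrib_left sum.swap[of _ A] mult.assoc)

lemma dot_evm_evm:
  "dot n (evm n a) (evm n b) = (\<Sum>p\<in>proj_points n. mnm n a p * mnm n b p)"
  unfolding dot_def evm_def evf_def by (rule sum.cong) auto

lemma dot_evf_evf:
  "dot n (evf n f) (evf n g) = (\<Sum>p\<in>proj_points n. f p * g p)"
  unfolding dot_def evf_def by (rule sum.cong) auto

lemma en_char:
  assumes a: "a \<in> monomials n l"
  shows "(\<forall>i<n. a i = 0) \<longleftrightarrow> a = (\<lambda>i. if i = n then l else 0)"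
proof
  assume z: "\<forall>i<n. a i = 0"
  have "(\<Sum>i\<le>n. a i) = (\<Sum>i<n. a i) + a n" by (simp add: lessThan_Suc_atMost[symmetric])
  then have "a n = l" using z a by (simp add: monomials_def)
  then show "a = (\<lambda>i. if i = n then l else 0)"
    using z a by (auto simp: monomials_def fun_eq_iff) (meson linorder_neqE_nat)
qed auto

lemma hull_dim:
  assumes n: "n \<ge> 1" and l: "2 * l < CARD('a::{finite,field}) - 1"
  shows "code_dim (code_hull n (PRM n (n * (CARD('a) - 1) - l) :: ((nat \<Rightarrow> 'a) \<Rightarrow> 'a) set))
       = card (monomials n l) - 1"
proof -
  let ?q = "CARD('a)"
  let ?k = "n * (?q - 1) - l"
  let ?M = "monomials n l"
  define en where "en = (\<lambda>i. if i = n then l else (0::nat))"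
  have enM: "en \<in> ?M" by (simp add: en_def monomials_def)
  have l1: "l < ?q - 1" using l by simp
  have lk: "l + ?k = n * (?q - 1)"
  proof -
    have "l \<le> n * (?q - 1)" using l1 n by (metis le_trans less_imp_le mult_le_mono1 mult_1)
    then show ?thesis by simp
  qed
  have kl: "?k + l = n * (?q - 1)" using lk by simp
  let ?B = "(evm n ` (?M - {en}) :: ((nat \<Rightarrow> 'a) \<Rightarrow> 'a) set)"
  have "V.dim (code_hull n (PRM n ?k) :: ((nat \<Rightarrow> 'a) \<Rightarrow> 'a) set) = card (?M - {en})"
  proof (rule V.dim_unique)
    show "?B \<subseteq> code_hull n (PRM n ?k)"
    proof
      fix w assume "w \<in> ?B"
      then obtain b where b: "b \<in> ?M" "b \<noteq> en" "w = evm n b" by blast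
      have "\<not> (\<forall>i<n. b i = 0)" using en_char[OF b(1)] b(2) unfolding en_def by blast
      then obtain z where z: "z < n" "0 < b z" by auto
      have inK: "(evm n b :: (nat \<Rightarrow> 'a) \<Rightarrow> 'a) \<in> PRM n ?k" unfolding evm_def by (rule small_in_big[OF n l b(1) z])
      have "(evm n b :: (nat \<Rightarrow> 'a) \<Rightarrow> 'a) \<in> dual_code n (PRM n ?k)"
        unfolding dual_code_def
      proof (intro CollectI conjI ballI)
        show "(evm n b :: (nat \<Rightarrow> 'a) \<Rightarrow> 'a) \<in> words n" by (simp add: words_def evm_def evf_def)
        fix w' assume "w' \<in> (PRM n ?k :: ((nat \<Rightarrow> 'a) \<Rightarrow> 'a) set)"
        then obtain g where g: "g \<in> Fm n ?k" "w' = evf n g" unfolding PRM_Fm by blast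
        show "dot n (evm n b) w' = 0"
          unfolding g(2) evm_def dot_evf_evf by (rule ortho_Fm[OF n lk Fm_mnm[OF b(1)] g(1)])
      qed
      then show "w \<in> code_hull n (PRM n ?k)" using inK b(3) by (simp add: code_hull_def)
    qed
  next
    show "code_hull n (PRM n ?k) \<subseteq> V.span ?B"
    proof
      fix v :: "(nat \<Rightarrow> 'a) \<Rightarrow> 'a" assume v: "v \<in> code_hull n (PRM n ?k)"
      then have vK: "v \<in> PRM n ?k" and vD: "v \<in> dual_code n (PRM n ?k)" by (auto simp: code_hull_def)
      have "v \<in> PRM n l" by (rule dual_sub[OF n l1 vD])
      then obtain f where f: "f \<in> Fm n l" "v = evf n f" unfolding PRM_Fm by blast
      obtain c where c: "evf n f = (\<Sum>a\<in>?M. (\<lambda>p. c a * evm n a p))" using evf_Fm_expand[OF f(1)] by blast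
      obtain g where g: "g \<in> Fm n ?k" "v = evf n g" using vK unfolding PRM_Fm by blast
      have "dot n v (evm n en) = (0::'a)"
        unfolding g(2) evm_def dot_evf_evf by (rule ortho_Fm[OF n kl g(1) Fm_mnm[OF enM]])
      moreover have "dot n v (evm n en) = c en"
      proof -
        have "dot n v (evm n en) = (\<Sum>a\<in>?M. c a * dot n (evm n a) (evm n en))"
          unfolding f(2) c by (rule dot_sum_left2)
        also have "\<dots> = (\<Sum>a\<in>?M. if a = en then c a else 0)"
        proof (rule sum.cong[OF refl])
          fix a assume a: "a \<in> ?M"
          have "dot n (evm n a) (evm n en) = (if \<forall>i<n. a i + en i = 0 then 1 else (0::'a))"
            unfolding dot_evm_evm by (rule gram_small[OF a enM l])
          also have "(\<forall>i<n. a i + en i = 0) \<longleftrightarrow> a = en"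
            using en_char[OF a] unfolding en_def by auto
          finally show "c a * dot n (evm n a) (evm n en) = (if a = en then c a else 0)" by simp
        qed
        also have "\<dots> = c en" using enM finite_monomials by (simp add: sum.delta')
        finally show ?thesis .
      qed
      ultimately have c0: "c en = 0" by simp
      have "v = (\<Sum>a\<in>?M. (\<lambda>p. c a * evm n a p))" using f(2) c by simp
      also have "\<dots> = (\<lambda>p. c en * evm n en p) + (\<Sum>a\<in>?M - {en}. (\<lambda>p. c a * evm n a p))"
        using enM finite_monomials by (simp add: sum.remove)
      also have "\<dots> = (\<Sum>a\<in>?M - {en}. (\<lambda>p. c a * evm n a p))"
        using c0 by (simp add: zero_fun_def)
      finally have veq: "v = (\<Sum>a\<in>?M - {en}. (\<lambda>p. c a * evm n a p))" .
      have "(\<Sum>a\<in>?M - {en}. (\<lambda>p. c a * evm n a p)) \<in> V.span ?B"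
      proof (rule V.span_sum)
        fix a assume a: "a \<in> ?M - {en}"
        have "evm n a \<in> V.span ?B" using a by (intro V.span_base) blast
        then show "(\<lambda>p. c a * evm n a p) \<in> V.span ?B" using V.span_scale by blast
      qed
      then show "v \<in> V.span ?B" using veq by simp
    qed
  next
    show "V.independent ?B"
      by (rule V.independent_mono[OF evm_indep[OF l1]]) blast
  next
    show "card ?B = card (?M - {en})"
      by (rule card_image) (rule inj_on_subset[OF evm_inj[OF l1]], blast)
  qed
  then show ?thesis using enM finite_monomials by (simp add: code_dim_def card_Diff_singleton)
qed

theorem mainTheorem9:
  fixes q n k :: nat
  assumes "CARD('a::{finite,field}) = q"
    and "\<exists>p m. prime p \<and> m \<ge> 1 \<and> q = p ^ m"
    and "n \<ge> 1"
    and "real n * (real q - 1) - (real q - 1) / 2 < real k"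
    and "k \<le> n * (q - 1)"
  shows "let l = n * (q - 1) - k in
         code_dim (code_hull n (PRM n k :: ((nat \<Rightarrow> 'a) \<Rightarrow> 'a) set))
           = code_dim (PRM n l :: ((nat \<Rightarrow> 'a) \<Rightarrow> 'a) set) - 1
       \<and> code_dim (PRM n l :: ((nat \<Rightarrow> 'a) \<Rightarrow> 'a) set) - 1
           = ((n + l) choose l) - 1"
proof -
  have q: "q = CARD('a)" using assms(1) by simp
  have q2: "q \<ge> 2" using card_ge2[where 'a='a] q by simp
  define l where "l = n * (q - 1) - k"
  have rq: "real (q - 1) = real q - 1" using q2 by (simp add: of_nat_diff)
  have rl: "real l = real n * (real q - 1) - real k"
    unfolding l_def using assms(5) by (simp add: of_nat_diff rq[symmetric])
  have "real (2 * l) < real (q - 1)" using assms(4) rl rq by (simp add: field_simps; linarith)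
  then have l2: "2 * l < CARD('a) - 1" using q by linarith
  have k: "k = n * (CARD('a) - 1) - l" unfolding l_def using assms(5) q by simp
  have h: "code_dim (code_hull n (PRM n k :: ((nat \<Rightarrow> 'a) \<Rightarrow> 'a) set)) = card (monomials n l) - 1"
    unfolding k by (rule hull_dim[OF assms(3) l2])
  have p: "code_dim (PRM n l :: ((nat \<Rightarrow> 'a) \<Rightarrow> 'a) set) = (n + l) choose l"
    using l2 by (intro dim_PRM) simp
  show ?thesis unfolding Let_def l_def[symmetric] using h p by (simp add: card_monomials)
qed

end
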